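(* Let $g$ be a non-constant power series with non-negative coefficients and radius of convergence $R>0$, and let $f=e^g$, with fulcrum $F(s)=\ln f(e^s)=g(e^s)$ for real $s<\ln R$. Assume that $g$ is a clan and that $\lim_{t\uparrow R}g(t)=+\infty$. Then $$\lim_{s\uparrow\ln R}\frac{F^{(k)}(s)}{F''(s)^{k/2}}=0\quad\text{for every integer }k\ge3,$$ for every integer $m\ge1$ one has $\lim_{t\uparrow R}\mathbf{E}(\breve{X}_t^m)=\mathbf{E}(Z^m)$ where $Z$ is a standard normal random variable, and $f$ is Gaussian.
   Context: The class $\mathcal{K}$ consists of non-constant power series $h(z)=\sum_{n\ge0}a_nz^n$ with radius of convergence $R\in(0,+\infty]$, with $a_n\ge 0$ for all $n$ and $a_0>0$. For $h\in\mathcal{K}$ and $t\in(0,R)$, its Khinchin family consists of the random variables $X_t$ with $\mathbf{P}(X_t=n)=a_nt^n/h(t)$, $n\ge0$; $m_h(t)=\mathbf{E}(X_t)=th'(t)/h(t)$, $\sigma_h^2(t)=\mathbf{V}(X_t)=t\,m_h'(t)$, and $\breve{X}_t=(X_t-m_h(t))/\sigma_h(t)$. A power series $h\in\mathcal{K}$ is called a clan if $\lim_{t\uparrow R}\sigma_h(t)/m_h(t)=0$. Here $f=e^g\in\mathcal{K}$, $(X_t)$ denotes the Khinchin family of $f$, and $f$ is called Gaussian if $\breve{X}_t$ converges in distribution to a standard normal random variable as $t\uparrow R$ ($t\to+\infty$ if $R=+\infty$). *)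

theory Defs
  imports "HOL-Probability.Probability" "HOL-Computational_Algebra.Formal_Power_Series"
begin

definition ps :: "(nat \<Rightarrow> real) \<Rightarrow> real \<Rightarrow> real" where
  "ps a t = (\<Sum>n. a n * t ^ n)"

definition exp_coeffs :: "(nat \<Rightarrow> real) \<Rightarrow> nat \<Rightarrow> real" where
  "exp_coeffs b = fps_nth (fps_const (exp (b 0)) * (fps_exp 1 oo (Abs_fps b - fps_const (b 0))))"

definition upto :: "ereal \<Rightarrow> real filter" where
  "upto R = (if R = \<infinity> then at_top else at_left (real_of_ereal R))"

definition upto_ln :: "ereal \<Rightarrow> real filter" where
  "upto_ln R = (if R = \<infinity> then at_top else at_left (ln (real_of_ereal R)))"

definition kmean :: "(nat \<Rightarrow> real) \<Rightarrow> real \<Rightarrow> real" where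
  "kmean a t = t * deriv (ps a) t / ps a t"

definition kvar :: "(nat \<Rightarrow> real) \<Rightarrow> real \<Rightarrow> real" where
  "kvar a t = t * deriv (kmean a) t"

definition ksd :: "(nat \<Rightarrow> real) \<Rightarrow> real \<Rightarrow> real" where
  "ksd a t = sqrt (kvar a t)"

definition kprob :: "(nat \<Rightarrow> real) \<Rightarrow> real \<Rightarrow> nat \<Rightarrow> real" where
  "kprob a t n = a n * t ^ n / ps a t"

definition knorm_moment :: "(nat \<Rightarrow> real) \<Rightarrow> real \<Rightarrow> nat \<Rightarrow> real" where
  "knorm_moment a t m = (\<Sum>n. kprob a t n * ((real n - kmean a t) / ksd a t) ^ m)"

definition knorm_cdf :: "(nat \<Rightarrow> real) \<Rightarrow> real \<Rightarrow> real \<Rightarrow> real" where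
  "knorm_cdf a t x = (\<Sum>n. if (real n - kmean a t) / ksd a t \<le> x then kprob a t n else 0)"

definition in_K :: "(nat \<Rightarrow> real) \<Rightarrow> bool" where
  "in_K a \<longleftrightarrow> (\<forall>n. a n \<ge> 0) \<and> a 0 > 0 \<and> (\<exists>n>0. a n \<noteq> 0) \<and> conv_radius a > 0"

definition is_clan :: "(nat \<Rightarrow> real) \<Rightarrow> bool" where
  "is_clan a \<longleftrightarrow> ((\<lambda>t. ksd a t / kmean a t) \<longlongrightarrow> 0) (upto (conv_radius a))"

definition std_normal_cdf :: "real \<Rightarrow> real" where
  "std_normal_cdf x = measure std_normal_distribution {..x}"

text \<open>Gaussian: normalized X_t converges in distribution to N(0,1), i.e. the distribution
  functions converge at every point (all points are continuity points of the normal cdf).\<close>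
definition gaussian :: "(nat \<Rightarrow> real) \<Rightarrow> bool" where
  "gaussian a \<longleftrightarrow> (\<forall>x. ((\<lambda>t. knorm_cdf a t x) \<longlongrightarrow> std_normal_cdf x) (upto (conv_radius a)))"

end

theory Submission
  imports Defs
begin


definition S :: "(nat \<Rightarrow> real) \<Rightarrow> nat \<Rightarrow> real \<Rightarrow> real" where
  "S c j x = (\<Sum>n. c n * real n ^ j * x ^ n)"

lemma conv_radius_mult_n:
  "conv_radius (\<lambda>n. c n * real n) \<ge> conv_radius (c :: nat \<Rightarrow> real)"
proof (rule conv_radius_geI_ex')
  fix r :: real assume r: "0 < r" "ereal r < conv_radius c"
  obtain K where K: "r < K" "ereal K < conv_radius c"
    using ereal_dense2[OF r(2)] by auto
  have "summable (\<lambda>n. diffs c n * r ^ n)"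
  proof (rule termdiff_converges[where K=K])
    show "norm r < K" using K r by simp
    fix x :: real assume "norm x < K"
    hence "ereal (norm x) < conv_radius c" using K(2) less_ereal.simps(1) order.strict_trans by blast
    thus "summable (\<lambda>n. c n * x ^ n)" by (rule summable_in_conv_radius)
  qed
  hence "summable (\<lambda>n. diffs c n * r ^ n * r)" by (rule summable_mult2)
  hence "summable (\<lambda>n. c (Suc n) * real (Suc n) * r ^ Suc n)"
    by (simp add: diffs_def algebra_simps)
  hence "summable (\<lambda>n. c n * real n * r ^ n)"
    using summable_Suc_iff[where f="\<lambda>n. c n * real n * r ^ n"] by simp
  thus "summable (\<lambda>n. c n * real n * of_real r ^ n)" by simp
qed

lemma conv_radius_pow: "conv_radius (\<lambda>n. c n * real n ^ j) \<ge> conv_radius (c :: nat \<Rightarrow> real)"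
proof (induction j)
  case 0 then show ?case by simp
next
  case (Suc j)
  have "conv_radius (\<lambda>n. (c n * real n ^ j) * real n) \<ge> conv_radius (\<lambda>n. c n * real n ^ j)"
    by (rule conv_radius_mult_n)
  moreover have "(\<lambda>n. (c n * real n ^ j) * real n) = (\<lambda>n. c n * real n ^ Suc j)"
    by (auto simp: algebra_simps)
  ultimately show ?case using Suc by (metis order_trans)
qed

lemma S_summable:
  assumes "ereal \<bar>x\<bar> < conv_radius c"
  shows "summable (\<lambda>n. c n * real n ^ j * x ^ n)"
proof -
  have "ereal (norm x) < conv_radius (\<lambda>n. c n * real n ^ j)"
    using assms conv_radius_pow[of c j] by auto
  thus ?thesis using summable_in_conv_radius by blast
qed

lemma S_abs_summable:
  assumes "ereal \<bar>x\<bar> < conv_radius c"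
  shows "summable (\<lambda>n. \<bar>c n * real n ^ j * x ^ n\<bar>)"
proof -
  have "ereal (norm x) < conv_radius (\<lambda>n. c n * real n ^ j)"
    using assms conv_radius_pow[of c j] by auto
  thus ?thesis using abs_summable_in_conv_radius[of x "\<lambda>n. c n * real n ^ j"] by simp
qed

lemma S_sums:
  assumes "ereal \<bar>x\<bar> < conv_radius c"
  shows "(\<lambda>n. c n * real n ^ j * x ^ n) sums S c j x"
  using S_summable[OF assms] by (simp add: S_def summable_sums)

lemma S_deriv:
  assumes x: "0 < x" "ereal x < conv_radius c"
  shows "(S c j has_real_derivative S c (Suc j) x / x) (at x)"
proof -
  define f where "f = (\<lambda>n. c n * real n ^ j)"
  have cr: "ereal (norm x) < conv_radius f"
    using x conv_radius_pow[of c j] by (auto simp: f_def)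
  have "((\<lambda>z. \<Sum>n. f n * z ^ n) has_field_derivative (\<Sum>n. diffs f n * x ^ n)) (at x)"
    by (rule has_field_derivative_powser[OF cr])
  moreover have "S c j = (\<lambda>z. \<Sum>n. f n * z ^ n)" by (auto simp: S_def f_def)
  moreover have "(\<Sum>n. diffs f n * x ^ n) = S c (Suc j) x / x"
  proof -
    have s: "(\<lambda>n. c n * real n ^ Suc j * x ^ n / x) sums (S c (Suc j) x / x)"
      using S_sums[of x c "Suc j"] x by (intro sums_divide) auto
    have "(\<lambda>n. c (Suc n) * real (Suc n) ^ Suc j * x ^ Suc n / x) sums (S c (Suc j) x / x)"
      using s sums_Suc_iff[where f="\<lambda>n. c n * real n ^ Suc j * x ^ n / x"] by simp
    moreover have "(\<lambda>n. c (Suc n) * real (Suc n) ^ Suc j * x ^ Suc n / x) = (\<lambda>n. diffs f n * x ^ n)"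
      using x by (auto simp: diffs_def f_def field_simps)
    ultimately show ?thesis by (metis sums_unique)
  qed
  ultimately show ?thesis by simp
qed

lemma S_deriv_exp:
  assumes "ereal (exp s) < conv_radius c"
  shows "((\<lambda>s. S c j (exp s)) has_real_derivative S c (Suc j) (exp s)) (at s)"
proof -
  have "((\<lambda>s. S c j (exp s)) has_real_derivative (S c (Suc j) (exp s) / exp s) * exp s) (at s)"
    by (rule DERIV_chain2[OF S_deriv]) (use assms in \<open>auto intro!: derivative_eq_intros\<close>)
  thus ?thesis by simp
qed

lemma S_nonneg:
  assumes "\<forall>n. c n \<ge> 0" "0 \<le> x" "ereal x < conv_radius c"
  shows "0 \<le> S c j x"
  unfolding S_def using assms S_summable[of x c j] by (intro suminf_nonneg) auto

lemma S_pos: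
  assumes "\<forall>n. c n \<ge> 0" "0 < x" "ereal x < conv_radius c" "c n0 > 0" "n0 > 0 \<or> j = 0"
  shows "0 < S c j x"
  unfolding S_def
proof (rule suminf_pos2[of _ n0])
  show "summable (\<lambda>n. c n * real n ^ j * x ^ n)" using S_summable assms by auto
  show "0 \<le> c n * real n ^ j * x ^ n" for n using assms by auto
  show "0 < c n0 * real n0 ^ j * x ^ n0" using assms by auto
qed

lemma S_mono_le:
  assumes "\<forall>n. c n \<ge> 0" "0 \<le> x" "x \<le> y" "ereal y < conv_radius c"
  shows "S c j x \<le> S c j y"
  unfolding S_def
proof (rule suminf_le)
  show "summable (\<lambda>n. c n * real n ^ j * x ^ n)" using S_summable assms
    by (metis abs_of_nonneg ereal_less_eq(3) order_le_less_trans)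
  show "summable (\<lambda>n. c n * real n ^ j * y ^ n)" using S_summable assms by auto
  show "c n * real n ^ j * x ^ n \<le> c n * real n ^ j * y ^ n" for n
    using assms by (intro mult_left_mono power_mono) auto
qed

lemma ps_eq_S: "ps c = S c 0" by (auto simp: ps_def S_def fun_eq_iff)

lemma deriv_open_eq:
  assumes "open U" "x \<in> U" "\<And>y. y \<in> U \<Longrightarrow> f y = g y" "(g has_real_derivative D) (at x)"
  shows "deriv f x = D"
proof -
  have "(f has_real_derivative D) (at x)"
    using has_field_derivative_transform_within_open[OF assms(4) assms(1) assms(2)] assms(3) by simp
  thus ?thesis by (rule DERIV_imp_deriv)
qed



lemma exp_coeffs_0: "exp_coeffs b 0 = exp (b 0)"
  by (simp add: exp_coeffs_def)

lemma exp_coeffs_rec: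
  "real n * exp_coeffs b n = (\<Sum>k\<le>n. real k * b k * exp_coeffs b (n - k))"
proof (cases n)
  case 0 then show ?thesis by simp
next
  case (Suc p)
  define H :: "real fps" where "H = Abs_fps b - fps_const (b 0)"
  define X where "X = fps_const (exp (b 0)) * (fps_exp 1 oo H)"
  have X: "exp_coeffs b = fps_nth X" by (simp add: exp_coeffs_def X_def H_def)
  have H0: "fps_nth H 0 = 0" by (simp add: H_def)
  have "fps_deriv X = fps_const (exp (b 0)) * ((fps_deriv (fps_exp 1) oo H) * fps_deriv H)"
    by (simp add: X_def fps_compose_deriv[OF H0])
  also have "\<dots> = X * fps_deriv H" by (simp add: X_def mult_ac)
  finally have d: "fps_deriv X = X * fps_deriv H" .
  have "fps_nth (fps_deriv X) p = fps_nth (X * fps_deriv H) p" using d by simp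
  hence "real (Suc p) * fps_nth X (Suc p) = (\<Sum>i=0..p. fps_nth X i * (real (Suc (p - i)) * b (Suc (p - i))))"
    by (simp add: fps_mult_nth H_def algebra_simps)
  also have "\<dots> = (\<Sum>i<Suc p. fps_nth X i * (real (Suc (p - i)) * b (Suc (p - i))))"
    by (simp add: atLeast0AtMost lessThan_Suc_atMost)
  also have "\<dots> = (\<Sum>i<Suc p. fps_nth X (Suc p - Suc i) * (real (Suc i) * b (Suc i)))"
    by (subst sum.nat_diff_reindex[symmetric]) (intro sum.cong refl, auto simp: Suc_diff_le)
  also have "\<dots> = (\<Sum>k\<le>Suc p. real k * b k * fps_nth X (Suc p - k))"
    by (subst sum.atMost_Suc_shift) (simp add: lessThan_Suc_atMost mult_ac)
  finally show ?thesis using Suc X by simp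
qed

lemma exp_coeffs_nonneg:
  assumes "\<forall>n. b n \<ge> 0"
  shows "exp_coeffs b n \<ge> 0"
proof (induction n rule: less_induct)
  case (less n)
  show ?case
  proof (cases n)
    case 0 then show ?thesis by (simp add: exp_coeffs_0)
  next
    case (Suc p)
    have "0 \<le> (\<Sum>k\<le>n. real k * b k * exp_coeffs b (n - k))"
    proof (intro sum_nonneg)
      fix k assume k: "k \<in> {..n}"
      show "0 \<le> real k * b k * exp_coeffs b (n - k)"
      proof (cases k)
        case 0 then show ?thesis by simp
      next
        case (Suc q)
        hence "n - k < n" using k Suc by auto
        thus ?thesis using less assms by auto
      qed
    qed
    hence "0 \<le> real n * exp_coeffs b n" by (simp add: exp_coeffs_rec[symmetric])
    thus ?thesis using Suc by (simp add: zero_le_mult_iff)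
  qed
qed

lemma triangle_le_product:
  fixes u v :: "nat \<Rightarrow> real"
  assumes "\<And>k. u k \<ge> 0" "\<And>k. v k \<ge> 0"
  shows "(\<Sum>n\<le>N. \<Sum>k\<le>n. u k * v (n - k)) \<le> (\<Sum>k\<le>N. u k) * (\<Sum>l\<le>N. v l)"
proof -
  have "(\<Sum>n\<le>N. \<Sum>k\<le>n. u k * v (n - k)) = (\<Sum>(i,j)\<in>{(i,j). i+j \<le> N}. u i * v j)"
    by (rule sum.triangle_reindex_eq[symmetric])
  also have "\<dots> \<le> (\<Sum>(i,j)\<in>{..N} \<times> {..N}. u i * v j)"
    by (rule sum_mono2) (auto intro!: mult_nonneg_nonneg assms)
  also have "\<dots> = (\<Sum>k\<le>N. u k) * (\<Sum>l\<le>N. v l)"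
    by (simp add: sum_product sum.cartesian_product)
  finally show ?thesis .
qed

lemma S_at_0: "S c 0 0 = c 0"
proof -
  have "(\<lambda>n. c n * real n ^ 0 * (0::real) ^ n) sums (c 0)"
  proof -
    have "(\<lambda>n. c n * real n ^ 0 * (0::real) ^ n) = (\<lambda>n. if n = 0 then c 0 else 0)"
      by (auto simp: fun_eq_iff)
    thus ?thesis using sums_single[of 0 "\<lambda>_. c 0"] by simp
  qed
  thus ?thesis by (simp add: S_def sums_iff)
qed

lemma S_isCont:
  assumes "ereal \<bar>x\<bar> < conv_radius c"
  shows "isCont (S c j) x"
proof -
  have cr: "ereal (norm x) < conv_radius (\<lambda>n. c n * real n ^ j)"
    using assms conv_radius_pow[of c j] by auto
  have "((\<lambda>z. \<Sum>n. (c n * real n ^ j) * z ^ n) has_field_derivative (\<Sum>n. diffs (\<lambda>n. c n * real n ^ j) n * x ^ n)) (at x)"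
    by (rule has_field_derivative_powser[OF cr])
  hence "isCont (\<lambda>z. \<Sum>n. (c n * real n ^ j) * z ^ n) x" by (rule DERIV_isCont)
  moreover have "S c j = (\<lambda>z. \<Sum>n. (c n * real n ^ j) * z ^ n)" by (auto simp: S_def fun_eq_iff)
  ultimately show ?thesis by simp
qed

lemma pow_helper: "a * (real n * y ^ (n - 1)) * y = real n * a * (y::real) ^ n"
  by (cases n) (auto simp: mult_ac)

lemma exp_coeffs_partial_bound:
  assumes nonneg: "\<forall>n. b n \<ge> 0" and x: "0 \<le> x" "ereal x < conv_radius b"
  shows "(\<Sum>n\<le>N. exp_coeffs b n * x ^ n) \<le> exp (S b 0 x)"
proof -
  define a where "a = exp_coeffs b"
  have a0: "\<And>n. a n \<ge> 0" using exp_coeffs_nonneg[OF nonneg] by (simp add: a_def)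
  define P where "P = (\<lambda>y. \<Sum>n\<le>N. a n * y ^ n)"
  define Q where "Q = (\<lambda>y. P y * exp (- S b 0 y))"
  have crx: "\<And>y. 0 \<le> y \<Longrightarrow> y \<le> x \<Longrightarrow> ereal \<bar>y\<bar> < conv_radius b"
    using x by (metis abs_of_nonneg ereal_less_eq(3) order_le_less_trans)
  have "Q x \<le> Q 0"
  proof (rule DERIV_nonpos_imp_decreasing_open[OF x(1)])
    show "continuous_on {0..x} Q"
      unfolding Q_def P_def
      by (intro continuous_at_imp_continuous_on ballI continuous_intros
            isCont_o2[where g=exp and f="\<lambda>y. - S b 0 y"] isCont_minus S_isCont crx) auto
  next
    fix y assume y: "0 < y" "y < x"
    have cry: "ereal y < conv_radius b" using crx[of y] y by auto
    have dP: "(P has_real_derivative (\<Sum>n\<le>N. a n * (real n * y ^ (n - 1)))) (at y)"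
      unfolding P_def by (auto intro!: derivative_eq_intros sum.cong simp: mult_ac)
    have dS: "(S b 0 has_real_derivative S b (Suc 0) y / y) (at y)"
      by (rule S_deriv[OF y(1) cry])
    have dE: "((\<lambda>y. exp (- S b 0 y)) has_real_derivative exp (- S b 0 y) * (- (S b (Suc 0) y / y))) (at y)"
      by (rule DERIV_chain2[OF DERIV_exp DERIV_minus[OF dS]])
    have dQ: "(Q has_real_derivative
        (\<Sum>n\<le>N. a n * (real n * y ^ (n - 1))) * exp (- S b 0 y) + (exp (- S b 0 y) * (- (S b (Suc 0) y / y))) * P y) (at y)"
      unfolding Q_def by (rule DERIV_mult[OF dP dE])
    have yP: "(\<Sum>n\<le>N. a n * (real n * y ^ (n - 1))) * y = (\<Sum>n\<le>N. real n * a n * y ^ n)"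
      unfolding sum_distrib_right
      by (intro sum.cong refl) (rule pow_helper)
    have "(\<Sum>k\<le>N. real k * b k * y ^ k) = (\<Sum>k\<le>N. b k * real k ^ Suc 0 * y ^ k)"
      by (simp add: mult_ac)
    also have "\<dots> \<le> S b (Suc 0) y"
      unfolding S_def
      by (rule sum_le_suminf) (use S_summable[of y b 1] cry y nonneg in auto)
    finally have sb: "(\<Sum>k\<le>N. real k * b k * y ^ k) \<le> S b (Suc 0) y" .
    have "(\<Sum>n\<le>N. real n * a n * y ^ n) = (\<Sum>n\<le>N. \<Sum>k\<le>n. (real k * b k * y ^ k) * (a (n - k) * y ^ (n - k)))"
    proof (intro sum.cong refl)
      fix n assume "n \<in> {..N}"
      have "real n * a n * y ^ n = (\<Sum>k\<le>n. real k * b k * a (n - k)) * y ^ n"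
        using exp_coeffs_rec[of n b] by (simp add: a_def)
      also have "\<dots> = (\<Sum>k\<le>n. (real k * b k * y ^ k) * (a (n - k) * y ^ (n - k)))"
        unfolding sum_distrib_right
        by (intro sum.cong refl) (auto simp: power_add[symmetric] mult_ac)
      finally show "real n * a n * y ^ n = (\<Sum>k\<le>n. (real k * b k * y ^ k) * (a (n - k) * y ^ (n - k)))" .
    qed
    also have "\<dots> \<le> (\<Sum>k\<le>N. real k * b k * y ^ k) * (\<Sum>l\<le>N. a l * y ^ l)"
      by (rule triangle_le_product) (use nonneg a0 y in auto)
    also have "(\<Sum>k\<le>N. real k * b k * y ^ k) * (\<Sum>l\<le>N. a l * y ^ l) \<le> S b (Suc 0) y * P y"
      using sb
      unfolding P_def by (intro mult_right_mono sum_nonneg) (use a0 y in auto)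
    finally have ineq: "(\<Sum>n\<le>N. a n * (real n * y ^ (n - 1))) * y \<le> S b (Suc 0) y * P y"
      using yP by simp
    have "(\<Sum>n\<le>N. a n * (real n * y ^ (n - 1))) \<le> P y * (S b (Suc 0) y / y)"
      using ineq y by (simp add: field_simps)
    hence "(\<Sum>n\<le>N. a n * (real n * y ^ (n - 1))) * exp (- S b 0 y) \<le> (P y * (S b (Suc 0) y / y)) * exp (- S b 0 y)"
      by (rule mult_right_mono) simp
    hence "(\<Sum>n\<le>N. a n * (real n * y ^ (n - 1))) * exp (- S b 0 y) + (exp (- S b 0 y) * (- (S b (Suc 0) y / y))) * P y \<le> 0"
      by (simp only: mult_ac) 
    thus "\<exists>D. (Q has_real_derivative D) (at y) \<and> D \<le> 0" using dQ by blast
  qed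
  moreover have "P 0 = a 0" unfolding P_def by (induction N) auto
  moreover have "Q 0 = 1"
    using calculation(2) by (simp add: Q_def S_at_0 a_def exp_coeffs_0 exp_minus field_simps)
  ultimately have "P x * exp (- S b 0 x) \<le> 1" by (simp add: Q_def del: exp_minus)
  thus ?thesis by (simp add: P_def a_def exp_minus field_simps)
qed

lemma conv_radius_exp_coeffs:
  assumes nonneg: "\<forall>n. b n \<ge> 0"
  shows "conv_radius (exp_coeffs b) \<ge> conv_radius b"
proof (rule conv_radius_geI_ex')
  fix r :: real assume r: "0 < r" "ereal r < conv_radius b"
  have "summable (\<lambda>n. exp_coeffs b n * r ^ n)"
  proof (rule summableI_nonneg_bounded[where x="exp (S b 0 r)"])
    show "0 \<le> exp_coeffs b n * r ^ n" for n using exp_coeffs_nonneg[OF nonneg] r by auto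
    fix n
    have "(\<Sum>i<n. exp_coeffs b i * r ^ i) \<le> (\<Sum>i\<le>n. exp_coeffs b i * r ^ i)"
      by (rule sum_mono2) (use exp_coeffs_nonneg[OF nonneg] r in auto)
    also have "\<dots> \<le> exp (S b 0 r)" using exp_coeffs_partial_bound[OF nonneg, of r n] r by auto
    finally show "(\<Sum>i<n. exp_coeffs b i * r ^ i) \<le> exp (S b 0 r)" .
  qed
  thus "summable (\<lambda>n. exp_coeffs b n * of_real r ^ n)" by simp
qed



definition T :: "(nat \<Rightarrow> real) \<Rightarrow> nat \<Rightarrow> real \<Rightarrow> real \<Rightarrow> real" where
  "T c j m x = (\<Sum>n. c n * (real n - m) ^ j * x ^ n)"

lemma T_abs_summable:
  assumes "ereal \<bar>x\<bar> < conv_radius c"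
  shows "summable (\<lambda>n. \<bar>c n * (real n - m) ^ j * x ^ n\<bar>)"
proof (rule summable_comparison_test')
  show "summable (\<lambda>n. \<Sum>i\<le>j. real (j choose i) * \<bar>m\<bar> ^ (j - i) * \<bar>c n * real n ^ i * x ^ n\<bar>)"
    by (intro summable_sum summable_mult S_abs_summable assms)
  fix n
  have "\<bar>real n - m\<bar> \<le> real n + \<bar>m\<bar>" by linarith
  hence "\<bar>real n - m\<bar> ^ j \<le> (real n + \<bar>m\<bar>) ^ j" by (intro power_mono) auto
  also have "\<dots> = (\<Sum>i\<le>j. real (j choose i) * real n ^ i * \<bar>m\<bar> ^ (j - i))"
    by (rule binomial_ring)
  finally have *: "\<bar>real n - m\<bar> ^ j \<le> (\<Sum>i\<le>j. real (j choose i) * real n ^ i * \<bar>m\<bar> ^ (j - i))" .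
  have "norm \<bar>c n * (real n - m) ^ j * x ^ n\<bar> = \<bar>c n\<bar> * \<bar>x\<bar> ^ n * \<bar>real n - m\<bar> ^ j"
    by (simp add: abs_mult power_abs)
  also have "\<dots> \<le> \<bar>c n\<bar> * \<bar>x\<bar> ^ n * (\<Sum>i\<le>j. real (j choose i) * real n ^ i * \<bar>m\<bar> ^ (j - i))"
    by (intro mult_left_mono *) auto
  also have "\<dots> = (\<Sum>i\<le>j. real (j choose i) * \<bar>m\<bar> ^ (j - i) * \<bar>c n * real n ^ i * x ^ n\<bar>)"
    by (simp add: sum_distrib_left abs_mult power_abs mult_ac)
  finally show "norm \<bar>c n * (real n - m) ^ j * x ^ n\<bar> \<le> (\<Sum>i\<le>j. real (j choose i) * \<bar>m\<bar> ^ (j - i) * \<bar>c n * real n ^ i * x ^ n\<bar>)" .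
qed

lemma T_summable:
  assumes "ereal \<bar>x\<bar> < conv_radius c"
  shows "summable (\<lambda>n. c n * (real n - m) ^ j * x ^ n)"
  by (rule summable_rabs_cancel[OF T_abs_summable[OF assms]])

lemma T0: "T c 0 m x = S c 0 x" by (simp add: T_def S_def)

lemma key_identity:
  fixes b :: "nat \<Rightarrow> real"
  defines "a \<equiv> exp_coeffs b"
  assumes nonneg: "\<forall>n. b n \<ge> 0" and x: "0 \<le> x" "ereal x < conv_radius b"
  shows "(\<lambda>n. a n * real n * (real n - m) ^ j * x ^ n) sums
           (\<Sum>i\<le>j. real (j choose i) * (S b (Suc i) x * T a (j - i) m x))"
proof -
  have cra: "ereal \<bar>x\<bar> < conv_radius a"
    using x conv_radius_exp_coeffs[OF nonneg] by (auto simp: a_def)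
  have crb: "ereal \<bar>x\<bar> < conv_radius b" using x by auto
  define u where "u = (\<lambda>i k. b k * real k ^ Suc i * x ^ k)"
  define v where "v = (\<lambda>i l. a l * (real l - m) ^ (j - i) * x ^ l)"
  have cp: "(\<lambda>n. \<Sum>k\<le>n. u i k * v i (n - k)) sums (S b (Suc i) x * T a (j - i) m x)" for i
  proof -
    have "(\<lambda>n. \<Sum>k\<le>n. u i k * v i (n - k)) sums ((\<Sum>k. u i k) * (\<Sum>k. v i k))"
    proof (rule Cauchy_product_sums)
      show "summable (\<lambda>k. norm (u i k))" unfolding u_def real_norm_def by (rule S_abs_summable[OF crb])
      show "summable (\<lambda>k. norm (v i k))" unfolding v_def real_norm_def by (rule T_abs_summable[OF cra])
    qed
    thus ?thesis unfolding u_def v_def S_def T_def .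
  qed
  have "(\<lambda>n. \<Sum>i\<le>j. real (j choose i) * (\<Sum>k\<le>n. u i k * v i (n - k))) sums
           (\<Sum>i\<le>j. real (j choose i) * (S b (Suc i) x * T a (j - i) m x))"
    by (intro sums_sum sums_mult cp)
  moreover have "(\<Sum>i\<le>j. real (j choose i) * (\<Sum>k\<le>n. u i k * v i (n - k))) = a n * real n * (real n - m) ^ j * x ^ n" for n
  proof -
    have "(\<Sum>i\<le>j. real (j choose i) * (\<Sum>k\<le>n. u i k * v i (n - k)))
        = (\<Sum>k\<le>n. \<Sum>i\<le>j. real (j choose i) * (u i k * v i (n - k)))"
      by (simp only: sum_distrib_left) (rule sum.swap)
    also have "\<dots> = (\<Sum>k\<le>n. (real k * b k * a (n - k)) * x ^ n * (\<Sum>i\<le>j. real (j choose i) * real k ^ i * (real (n - k) - m) ^ (j - i)))"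
    proof (intro sum.cong refl)
      fix k assume k: "k \<in> {..n}"
      have xp: "x ^ k * x ^ (n - k) = x ^ n" using k by (simp add: power_add[symmetric])
      show "(\<Sum>i\<le>j. real (j choose i) * (u i k * v i (n - k))) =
            (real k * b k * a (n - k)) * x ^ n * (\<Sum>i\<le>j. real (j choose i) * real k ^ i * (real (n - k) - m) ^ (j - i))"
        unfolding sum_distrib_left
      proof (intro sum.cong refl)
        fix i assume "i \<in> {..j}"
        have "real (j choose i) * (u i k * v i (n - k)) = (real k * b k * a (n - k)) * (x ^ k * x ^ (n - k)) * (real (j choose i) * real k ^ i * (real (n - k) - m) ^ (j - i))"
          by (simp add: u_def v_def mult_ac)
        also have "\<dots> = (real k * b k * a (n - k)) * x ^ n * (real (j choose i) * real k ^ i * (real (n - k) - m) ^ (j - i))"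
          by (simp only: xp)
        finally show "real (j choose i) * (u i k * v i (n - k)) = (real k * b k * a (n - k)) * x ^ n * (real (j choose i) * real k ^ i * (real (n - k) - m) ^ (j - i))" .
      qed
    qed
    also have "\<dots> = (\<Sum>k\<le>n. (real k * b k * a (n - k)) * x ^ n * (real n - m) ^ j)"
    proof (intro sum.cong refl)
      fix k assume k: "k \<in> {..n}"
      have "(\<Sum>i\<le>j. real (j choose i) * real k ^ i * (real (n - k) - m) ^ (j - i)) = (real k + (real (n - k) - m)) ^ j"
        by (rule binomial_ring[symmetric])
      also have "real k + (real (n - k) - m) = real n - m" using k by (simp add: of_nat_diff)
      finally show "(real k * b k * a (n - k)) * x ^ n * (\<Sum>i\<le>j. real (j choose i) * real k ^ i * (real (n - k) - m) ^ (j - i))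
          = (real k * b k * a (n - k)) * x ^ n * (real n - m) ^ j" by simp
    qed
    also have "\<dots> = (\<Sum>k\<le>n. real k * b k * a (n - k)) * x ^ n * (real n - m) ^ j"
      by (simp add: sum_distrib_right)
    also have "\<dots> = a n * real n * (real n - m) ^ j * x ^ n"
      using exp_coeffs_rec[of n b] by (simp add: a_def mult_ac)
    finally show ?thesis .
  qed
  ultimately show ?thesis by simp
qed

lemma S_a_1:
  fixes b :: "nat \<Rightarrow> real"
  defines "a \<equiv> exp_coeffs b"
  assumes nonneg: "\<forall>n. b n \<ge> 0" and x: "0 \<le> x" "ereal x < conv_radius b"
  shows "S a 1 x = S b 1 x * S a 0 x"
proof -
  have "(\<lambda>n. a n * real n * (real n - 0) ^ 0 * x ^ n) sums
           (\<Sum>i\<le>0. real (0 choose i) * (S b (Suc i) x * T a (0 - i) 0 x))"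
    using key_identity[OF nonneg x, of 0 0] by (simp add: a_def)
  hence "(\<lambda>n. a n * real n ^ 1 * x ^ n) sums (S b 1 x * S a 0 x)" by (simp add: T0)
  thus ?thesis by (simp add: S_def sums_iff)
qed

lemma T_rec:
  fixes b :: "nat \<Rightarrow> real"
  defines "a \<equiv> exp_coeffs b"
  assumes nonneg: "\<forall>n. b n \<ge> 0" and x: "0 \<le> x" "ereal x < conv_radius b"
  shows "T a (Suc j) (S b 1 x) x = (\<Sum>i\<in>{1..j}. real (j choose i) * (S b (Suc i) x * T a (j - i) (S b 1 x) x))"
proof -
  define m where "m = S b 1 x"
  have cra: "ereal \<bar>x\<bar> < conv_radius a"
    using x conv_radius_exp_coeffs[OF nonneg] by (auto simp: a_def)
  have k: "(\<lambda>n. a n * real n * (real n - m) ^ j * x ^ n) sums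
           (\<Sum>i\<le>j. real (j choose i) * (S b (Suc i) x * T a (j - i) m x))"
    using key_identity[OF nonneg x, of m j] by (simp add: a_def)
  have s1: "(\<lambda>n. a n * (real n - m) ^ Suc j * x ^ n) sums T a (Suc j) m x"
    unfolding T_def by (rule summable_sums[OF T_summable[OF cra]])
  have s2: "(\<lambda>n. a n * (real n - m) ^ j * x ^ n) sums T a j m x"
    unfolding T_def by (rule summable_sums[OF T_summable[OF cra]])
  have "(\<lambda>n. a n * (real n - m) ^ Suc j * x ^ n + m * (a n * (real n - m) ^ j * x ^ n)) sums (T a (Suc j) m x + m * T a j m x)"
    by (rule sums_add[OF s1 sums_mult[OF s2]])
  moreover have "(\<lambda>n. a n * (real n - m) ^ Suc j * x ^ n + m * (a n * (real n - m) ^ j * x ^ n)) = (\<lambda>n. a n * real n * (real n - m) ^ j * x ^ n)"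
    by (auto simp: fun_eq_iff algebra_simps)
  ultimately have e1: "(\<lambda>n. a n * real n * (real n - m) ^ j * x ^ n) sums (T a (Suc j) m x + m * T a j m x)"
    by simp
  have "T a (Suc j) m x + m * T a j m x = (\<Sum>i\<le>j. real (j choose i) * (S b (Suc i) x * T a (j - i) m x))"
    by (rule sums_unique2[OF e1 k])
  also have "(\<Sum>i\<le>j. real (j choose i) * (S b (Suc i) x * T a (j - i) m x))
      = real (j choose 0) * (S b (Suc 0) x * T a (j - 0) m x) + (\<Sum>i\<in>{Suc 0..j}. real (j choose i) * (S b (Suc i) x * T a (j - i) m x))"
    unfolding atMost_atLeast0 by (rule sum.atLeast_Suc_atMost) simp
  also have "real (j choose 0) * (S b (Suc 0) x * T a (j - 0) m x) = m * T a j m x"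
    by (simp add: m_def)
  finally show ?thesis by (simp add: m_def)
qed



lemma open_U: "open {y::real. 0 < y \<and> ereal y < r}"
proof -
  have "open {y::real. 0 < y}" by (rule open_Collect_less) (auto intro: continuous_intros)
  moreover have "open {y::real. ereal y < r}"
    by (rule open_Collect_less) (auto intro: continuous_intros continuous_on_ereal)
  ultimately show ?thesis by (simp add: Collect_conj_eq open_Int)
qed

lemma deriv_ps:
  assumes "0 < t" "ereal t < conv_radius c"
  shows "deriv (ps c) t = S c 1 t / t"
  using S_deriv[OF assms, of 0] by (simp add: ps_eq_S DERIV_imp_deriv)

lemma kmean_eq:
  assumes "0 < t" "ereal t < conv_radius c"
  shows "kmean c t = S c 1 t / S c 0 t"
proof -
  have "deriv (S c 0) t = S c 1 t / t" using deriv_ps[OF assms] by (simp add: ps_eq_S)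
  thus ?thesis using assms by (simp add: kmean_def ps_eq_S)
qed

lemma S_a0_pos:
  assumes nonneg: "\<forall>n. b n \<ge> 0" and t: "0 < t" "ereal t < conv_radius b"
  shows "0 < S (exp_coeffs b) 0 t"
proof (rule S_pos[of _ _ 0])
  show "\<forall>n. 0 \<le> exp_coeffs b n" using exp_coeffs_nonneg[OF nonneg] by auto
  show "ereal t < conv_radius (exp_coeffs b)" using t conv_radius_exp_coeffs[OF nonneg] by auto
qed (use t in \<open>auto simp: exp_coeffs_0\<close>)

lemma kmean_a:
  assumes nonneg: "\<forall>n. b n \<ge> 0" and t: "0 < t" "ereal t < conv_radius b"
  shows "kmean (exp_coeffs b) t = S b 1 t"
proof -
  have cr: "ereal t < conv_radius (exp_coeffs b)" using t conv_radius_exp_coeffs[OF nonneg] by auto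
  show ?thesis using S_a0_pos[OF assms] S_a_1[OF nonneg _ t(2)] t
    by (simp add: kmean_eq[OF t(1) cr])
qed

lemma kvar_a:
  assumes nonneg: "\<forall>n. b n \<ge> 0" and t: "0 < t" "ereal t < conv_radius b"
  shows "kvar (exp_coeffs b) t = S b 2 t"
proof -
  have "deriv (kmean (exp_coeffs b)) t = S b 2 t / t"
  proof (rule deriv_open_eq[OF open_U[of "conv_radius b"]])
    show "t \<in> {y. 0 < y \<and> ereal y < conv_radius b}" using t by auto
    show "kmean (exp_coeffs b) y = S b 1 y" if "y \<in> {y. 0 < y \<and> ereal y < conv_radius b}" for y
      using that kmean_a[OF nonneg] by auto
    show "(S b 1 has_real_derivative S b 2 t / t) (at t)"
      using S_deriv[OF t, of 1] by (simp add: numeral_2_eq_2)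
  qed
  thus ?thesis using t by (simp add: kvar_def)
qed

lemma kmean_b_deriv:
  assumes nonneg: "\<forall>n. b n \<ge> 0" and nc: "b n0 > 0" "n0 > 0" and t: "0 < t" "ereal t < conv_radius b"
  shows "(kmean b has_real_derivative ((S b 2 t * S b 0 t - S b 1 t ^ 2) / S b 0 t ^ 2) / t) (at t)"
proof -
  have p0: "S b 0 t > 0" using S_pos[OF nonneg t(1) t(2) nc(1)] nc by auto
  have d: "((\<lambda>y. S b 1 y / S b 0 y) has_real_derivative
      ((S b 2 t / t) * S b 0 t - S b 1 t * (S b 1 t / t)) / (S b 0 t * S b 0 t)) (at t)"
    using DERIV_divide[OF S_deriv[OF t, of 1] S_deriv[OF t, of 0]] p0 by (simp add: numeral_2_eq_2)
  have d2: "((\<lambda>y. S b 1 y / S b 0 y) has_real_derivative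
      ((S b 2 t * S b 0 t - S b 1 t ^ 2) / S b 0 t ^ 2) / t) (at t)"
    using d t p0 by (simp add: field_simps power2_eq_square)
  show ?thesis
  proof (rule has_field_derivative_transform_within_open[OF d2 open_U[of "conv_radius b"]])
    show "t \<in> {y. 0 < y \<and> ereal y < conv_radius b}" using t by auto
    show "S b 1 y / S b 0 y = kmean b y" if "y \<in> {y. 0 < y \<and> ereal y < conv_radius b}" for y
      using that kmean_eq[of y b] by auto
  qed
qed

lemma kvar_b:
  assumes nonneg: "\<forall>n. b n \<ge> 0" and nc: "b n0 > 0" "n0 > 0" and t: "0 < t" "ereal t < conv_radius b"
  shows "kvar b t = (S b 2 t * S b 0 t - S b 1 t ^ 2) / S b 0 t ^ 2"
  using DERIV_imp_deriv[OF kmean_b_deriv[OF assms]] t by (simp add: kvar_def)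

definition nu :: "(nat \<Rightarrow> real) \<Rightarrow> real \<Rightarrow> nat \<Rightarrow> real" where
  "nu b t j = T (exp_coeffs b) j (S b 1 t) t / (S (exp_coeffs b) 0 t * sqrt (S b 2 t) ^ j)"

lemma knorm_moment_nu:
  assumes nonneg: "\<forall>n. b n \<ge> 0" and t: "0 < t" "ereal t < conv_radius b"
  shows "knorm_moment (exp_coeffs b) t j = nu b t j"
proof -
  define a where "a = exp_coeffs b"
  have cr: "ereal \<bar>t\<bar> < conv_radius a" using t conv_radius_exp_coeffs[OF nonneg] by (auto simp: a_def)
  have "knorm_moment a t j = (\<Sum>n. (a n * (real n - S b 1 t) ^ j * t ^ n) / (S a 0 t * sqrt (S b 2 t) ^ j))"
    unfolding knorm_moment_def kprob_def ksd_def
    using kmean_a[OF nonneg t] kvar_a[OF nonneg t]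
    by (simp add: a_def ps_eq_S power_divide field_simps)
  also have "\<dots> = T a j (S b 1 t) t / (S a 0 t * sqrt (S b 2 t) ^ j)"
    unfolding T_def by (rule suminf_divide[OF T_summable[OF cr]])
  finally show ?thesis by (simp add: nu_def a_def)
qed

lemma nu_0:
  assumes nonneg: "\<forall>n. b n \<ge> 0" and t: "0 < t" "ereal t < conv_radius b"
  shows "nu b t 0 = 1"
  using S_a0_pos[OF assms] by (simp add: nu_def T0)

lemma nu_rec:
  assumes nonneg: "\<forall>n. b n \<ge> 0" and nc: "b n0 > 0" "n0 > 0" and t: "0 < t" "ereal t < conv_radius b"
  shows "nu b t (Suc j) = (\<Sum>i\<in>{1..j}. real (j choose i) * (S b (Suc i) t / sqrt (S b 2 t) ^ Suc i) * nu b t (j - i))"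
proof -
  define a where "a = exp_coeffs b"
  define \<sigma> where "\<sigma> = sqrt (S b 2 t)"
  have s2: "S b 2 t > 0" using S_pos[OF nonneg t(1) t(2) nc(1)] nc by auto
  hence sp: "\<sigma> > 0" by (simp add: \<sigma>_def)
  have a0: "S a 0 t > 0" using S_a0_pos[OF nonneg t] by (simp add: a_def)
  have "nu b t (Suc j) = T a (Suc j) (S b 1 t) t / (S a 0 t * \<sigma> ^ Suc j)"
    by (simp add: nu_def a_def \<sigma>_def)
  also have "\<dots> = (\<Sum>i\<in>{1..j}. real (j choose i) * (S b (Suc i) t * T a (j - i) (S b 1 t) t)) / (S a 0 t * \<sigma> ^ Suc j)"
    using T_rec[OF nonneg _ t(2), of j] t by (simp add: a_def)
  also have "\<dots> = (\<Sum>i\<in>{1..j}. real (j choose i) * (S b (Suc i) t / \<sigma> ^ Suc i) * (T a (j - i) (S b 1 t) t / (S a 0 t * \<sigma> ^ (j - i))))"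
    unfolding sum_divide_distrib
  proof (intro sum.cong refl)
    fix i assume i: "i \<in> {1..j}"
    have "\<sigma> ^ Suc j = \<sigma> ^ Suc i * \<sigma> ^ (j - i)" using i by (simp add: power_add[symmetric])
    thus "real (j choose i) * (S b (Suc i) t * T a (j - i) (S b 1 t) t) / (S a 0 t * \<sigma> ^ Suc j) =
        real (j choose i) * (S b (Suc i) t / \<sigma> ^ Suc i) * (T a (j - i) (S b 1 t) t / (S a 0 t * \<sigma> ^ (j - i)))"
      using sp a0 by (simp add: field_simps)
  qed
  finally show ?thesis by (simp add: nu_def a_def \<sigma>_def)
qed



lemma ev_upto_iff:
  assumes "r > 0"
  shows "eventually P (upto r) \<longleftrightarrow> (\<exists>t0>0. ereal t0 < r \<and> (\<forall>t. t0 < t \<and> ereal t < r \<longrightarrow> P t))"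
proof (cases r)
  case PInf
  show ?thesis
  proof
    assume "eventually P (upto r)"
    then obtain N where N: "\<forall>n\<ge>N. P n" by (auto simp: upto_def PInf eventually_at_top_linorder)
    show "\<exists>t0>0. ereal t0 < r \<and> (\<forall>t. t0 < t \<and> ereal t < r \<longrightarrow> P t)"
      by (rule exI[of _ "max N 1"]) (use N PInf in \<open>auto simp: max_def\<close>)
  next
    assume "\<exists>t0>0. ereal t0 < r \<and> (\<forall>t. t0 < t \<and> ereal t < r \<longrightarrow> P t)"
    then obtain t0 where "\<forall>t. t0 < t \<longrightarrow> P t" using PInf by auto
    thus "eventually P (upto r)"
      by (auto simp: upto_def PInf eventually_at_top_linorder intro!: exI[of _ "t0 + 1"])
  qed
next
  case (real R)
  have R: "R > 0" using assms real by auto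
  show ?thesis
  proof
    assume "eventually P (upto r)"
    then obtain c where c: "c < R" "\<forall>y>c. y < R \<longrightarrow> P y"
      by (auto simp: upto_def real eventually_at_left_field)
    show "\<exists>t0>0. ereal t0 < r \<and> (\<forall>t. t0 < t \<and> ereal t < r \<longrightarrow> P t)"
      by (rule exI[of _ "max c (R/2)"]) (use c R real in auto)
  next
    assume "\<exists>t0>0. ereal t0 < r \<and> (\<forall>t. t0 < t \<and> ereal t < r \<longrightarrow> P t)"
    then obtain t0 where "t0 < R" "\<forall>t. t0 < t \<and> t < R \<longrightarrow> P t" using real by auto
    thus "eventually P (upto r)"
      by (auto simp: upto_def real eventually_at_left_field)
  qed
qed (use assms in auto)

lemma upto_nontrivial: "r > 0 \<Longrightarrow> upto r \<noteq> bot"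
  by (cases r) (auto simp: upto_def)

lemma ev_upto_dom: "r > 0 \<Longrightarrow> eventually (\<lambda>t. 0 < t \<and> ereal t < r) (upto r)"
  by (subst ev_upto_iff) (auto intro!: exI[of _ "if r = \<infinity> then 1 else real_of_ereal r / 2"], (cases r; auto)+)

lemma ev_upto_gt: "r > 0 \<Longrightarrow> 0 < c \<Longrightarrow> ereal c < r \<Longrightarrow> eventually (\<lambda>t. c < t) (upto r)"
  by (subst ev_upto_iff) auto

lemma sqrt_sq_abs: "(sqrt x)^2 = \<bar>x\<bar>"
proof (cases "x \<ge> 0")
  case True thus ?thesis by simp
next
  case False
  hence "sqrt x = - sqrt (-x)" using real_sqrt_minus[of "-x"] by simp
  thus ?thesis using False by simp
qed

lemma exp_ge_pow_fact:
  fixes x :: real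
  assumes "0 \<le> x" shows "x ^ k / fact k \<le> exp x"
proof -
  have s: "(\<lambda>n. x^n / fact n) sums exp x" 
  proof -
    have "(\<lambda>n. x ^ n /\<^sub>R fact n) = (\<lambda>n. (x::real) ^ n / fact n)"
      by (simp add: fun_eq_iff field_simps)
    thus ?thesis using exp_converges[of x] by simp
  qed
  have "x ^ k / fact k \<le> (\<Sum>n\<in>{k}. x^n / fact n)" by simp
  also have "\<dots> \<le> exp x"
    using sums_summable[OF s] sums_unique[OF s] assms
    by (metis (no_types, lifting) divide_nonneg_nonneg fact_ge_zero finite.emptyI finite.insertI sum_le_suminf zero_le_power)
  finally show ?thesis .
qed

locale kh =
  fixes b :: "nat \<Rightarrow> real" and n0 :: nat
  assumes nonneg: "\<forall>n. b n \<ge> 0" and nc: "b n0 > 0" "n0 > 0" and radius: "conv_radius b > 0"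
begin

lemma Sb_pos: "0 < t \<Longrightarrow> ereal t < conv_radius b \<Longrightarrow> 0 < S b j t"
  using S_pos[OF nonneg _ _ nc(1)] nc(2) by auto

lemma m_pos: "0 < t \<Longrightarrow> ereal t < conv_radius b \<Longrightarrow> 0 < kmean b t"
  using Sb_pos kmean_eq by auto

lemma m_deriv: "0 < t \<Longrightarrow> ereal t < conv_radius b \<Longrightarrow> (kmean b has_real_derivative kvar b t / t) (at t)"
  using kmean_b_deriv[OF nonneg nc] kvar_b[OF nonneg nc] by auto

lemma m_exp_deriv:
  assumes "ereal (exp u) < conv_radius b"
  shows "((\<lambda>u. kmean b (exp u)) has_real_derivative kvar b (exp u)) (at u)"
proof -
  have "((\<lambda>u. kmean b (exp u)) has_real_derivative (kvar b (exp u) / exp u) * exp u) (at u)"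
    by (rule DERIV_chain2[OF m_deriv DERIV_exp]) (use assms in auto)
  thus ?thesis by simp
qed

lemma h_deriv:
  assumes "ereal (exp u) < conv_radius b"
  shows "((\<lambda>u. inverse (kmean b (exp u))) has_real_derivative - (kvar b (exp u) / kmean b (exp u) ^ 2)) (at u)"
  using DERIV_inverse_fun[OF m_exp_deriv[OF assms]] m_pos[of "exp u"] assms
  by (simp add: divide_inverse power2_eq_square)

lemma lnS_deriv:
  assumes "ereal (exp u) < conv_radius b"
  shows "((\<lambda>u. ln (S b 0 (exp u))) has_real_derivative kmean b (exp u)) (at u)"
proof -
  have p: "0 < S b 0 (exp u)" using Sb_pos assms by auto
  have "((\<lambda>u. ln (S b 0 (exp u))) has_real_derivative inverse (S b 0 (exp u)) * S b (Suc 0) (exp u)) (at u)"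
    by (rule DERIV_chain2[OF DERIV_ln[OF p] S_deriv_exp[OF assms, of 0]])
  thus ?thesis using kmean_eq[of "exp u" b] assms by (simp add: divide_inverse mult_ac)
qed

lemma CS: "0 < t \<Longrightarrow> ereal t < conv_radius b \<Longrightarrow> S b 1 t ^ 2 \<le> S b 2 t * S b 0 t"
proof -
  assume t: "0 < t" "ereal t < conv_radius b"
  define m where "m = S b 1 t / S b 0 t"
  have p0: "S b 0 t > 0" using Sb_pos t by auto
  have cr: "ereal \<bar>t\<bar> < conv_radius b" using t by auto
  have s: "(\<lambda>n. b n * real n ^ 2 * t ^ n - 2 * m * (b n * real n ^ 1 * t ^ n) + m^2 * (b n * real n ^ 0 * t ^ n))
      sums (S b 2 t - 2 * m * S b 1 t + m^2 * S b 0 t)"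
    by (intro sums_add sums_diff sums_mult S_sums cr)
  have "0 \<le> S b 2 t - 2 * m * S b 1 t + m^2 * S b 0 t"
  proof (rule sums_le[OF _ sums_zero s])
    fix n show "0 \<le> b n * real n ^ 2 * t ^ n - 2 * m * (b n * real n ^ 1 * t ^ n) + m^2 * (b n * real n ^ 0 * t ^ n)"
    proof -
      have "b n * real n ^ 2 * t ^ n - 2 * m * (b n * real n ^ 1 * t ^ n) + m^2 * (b n * real n ^ 0 * t ^ n)
          = b n * t ^ n * (real n - m)^2" by (simp add: power2_eq_square algebra_simps)
      thus ?thesis using nonneg t by auto
    qed
  qed
  hence "0 \<le> (S b 2 t - 2 * m * S b 1 t + m^2 * S b 0 t) * S b 0 t" using p0 by simp
  also have "(S b 2 t - 2 * m * S b 1 t + m^2 * S b 0 t) * S b 0 t = S b 2 t * S b 0 t - S b 1 t ^ 2"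
    using p0 by (simp add: m_def power2_eq_square field_simps)
  finally show ?thesis by simp
qed

end



locale kh_clan = kh +
  fixes t0 :: real
  assumes t0: "0 < t0" "ereal t0 < conv_radius b"
    and clanb: "\<And>t. t0 < t \<Longrightarrow> ereal t < conv_radius b \<Longrightarrow> \<bar>kvar b t\<bar> \<le> kmean b t ^ 2 / 4"
    and ginf: "filterlim (S b 0) at_top (upto (conv_radius b))"
begin

definition h where "h u = inverse (kmean b (exp u))"

lemma ereal_exp_le: "v \<le> u \<Longrightarrow> ereal (exp u) < conv_radius b \<Longrightarrow> ereal (exp v) < conv_radius b"
  by (meson ereal_less_eq(3) exp_le_cancel_iff order_le_less_trans)

lemma h_pos: "ereal (exp s) < conv_radius b \<Longrightarrow> 0 < h s"
  using m_pos[of "exp s"] by (simp add: h_def)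

lemma claimA:
  assumes a: "t0 < exp s" "s \<le> u" "ereal (exp u) < conv_radius b"
  shows "h s - (u - s) / 4 \<le> h u"
proof -
  have "h s + s / 4 \<le> h u + u / 4"
  proof (rule DERIV_nonneg_imp_nondecreasing[of s u "\<lambda>v. h v + v / 4"])
    show "s \<le> u" by fact
    fix v assume v: "s \<le> v" "v \<le> u"
    have ev: "ereal (exp v) < conv_radius b" using ereal_exp_le[OF v(2) a(3)] .
    have tv: "t0 < exp v" using a(1) v(1) by (meson exp_le_cancel_iff less_le_trans)
    have d: "((\<lambda>v. h v + v / 4) has_real_derivative (- (kvar b (exp v) / kmean b (exp v) ^ 2) + 1 / 4)) (at v)"
      unfolding h_def by (intro DERIV_add h_deriv ev) (auto intro!: derivative_eq_intros)
    have mp: "0 < kmean b (exp v)" using m_pos[of "exp v"] ev by auto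
    have "kvar b (exp v) \<le> kmean b (exp v) ^ 2 / 4" using clanb[OF tv ev] by linarith
    hence "kvar b (exp v) / kmean b (exp v) ^ 2 \<le> 1 / 4" using mp by (simp add: field_simps)
    thus "\<exists>y. ((\<lambda>v. h v + v / 4) has_real_derivative y) (at v) \<and> 0 \<le> y" using d by force
  qed
  thus ?thesis by (simp add: field_simps)
qed

lemma claimA2:
  assumes a: "t0 < exp s" "s \<le> u" "u \<le> s + h s" "ereal (exp u) < conv_radius b"
  shows "kmean b (exp u) \<le> 4 / 3 * kmean b (exp s)"
proof -
  have es: "ereal (exp s) < conv_radius b" using ereal_exp_le[OF a(2) a(4)] .
  have hs: "0 < h s" using h_pos[OF es] .
  have "h s - (u - s) / 4 \<le> h u" using claimA[OF a(1) a(2) a(4)] .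
  hence "h s * 4 - (u - s) \<le> 4 * h u" by (simp add: field_simps)
  hence "3 * h s \<le> 4 * h u" using a(3) by linarith
  hence hu: "3 / 4 * h s \<le> h u" by simp
  have mu: "0 < kmean b (exp u)" using m_pos[of "exp u"] a(4) by auto
  have ms: "0 < kmean b (exp s)" using m_pos[of "exp s"] es by auto
  have "inverse (kmean b (exp u)) \<ge> 3 / 4 * inverse (kmean b (exp s))" using hu by (simp add: h_def)
  thus ?thesis using mu ms by (simp add: field_simps)
qed

lemma claimG:
  assumes a: "t0 < exp s" "s \<le> u" "u \<le> s + h s" "ereal (exp u) < conv_radius b"
  shows "S b 0 (exp u) \<le> exp (4 / 3) * S b 0 (exp s)"
proof -
  have es: "ereal (exp s) < conv_radius b" using ereal_exp_le[OF a(2) a(4)] .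
  define M where "M = kmean b (exp s)"
  have ms: "0 < M" using m_pos[of "exp s"] es by (auto simp: M_def)
  have "ln (S b 0 (exp u)) - 4 / 3 * M * u \<le> ln (S b 0 (exp s)) - 4 / 3 * M * s"
  proof (rule DERIV_nonpos_imp_nonincreasing[of s u "\<lambda>v. ln (S b 0 (exp v)) - 4 / 3 * M * v"])
    show "s \<le> u" by fact
    fix v assume v: "s \<le> v" "v \<le> u"
    have ev: "ereal (exp v) < conv_radius b" using ereal_exp_le[OF v(2) a(4)] .
    have d: "((\<lambda>v. ln (S b 0 (exp v)) - 4 / 3 * M * v) has_real_derivative kmean b (exp v) - 4 / 3 * M) (at v)"
      by (intro DERIV_diff lnS_deriv ev) (auto intro!: derivative_eq_intros)
    have "kmean b (exp v) \<le> 4 / 3 * M"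
      unfolding M_def by (rule claimA2) (use a v ev in auto)
    thus "\<exists>y. ((\<lambda>v. ln (S b 0 (exp v)) - 4 / 3 * M * v) has_real_derivative y) (at v) \<and> y \<le> 0"
      using d by force
  qed
  hence "ln (S b 0 (exp u)) \<le> ln (S b 0 (exp s)) + 4 / 3 * (M * (u - s))" by (simp add: field_simps)
  also have "M * (u - s) \<le> M * h s" using a(3) ms by (intro mult_left_mono) auto
  also have "M * h s = 1" using ms by (simp add: M_def h_def)
  finally have "ln (S b 0 (exp u)) \<le> ln (S b 0 (exp s)) + 4 / 3" by simp
  hence "exp (ln (S b 0 (exp u))) \<le> exp (ln (S b 0 (exp s)) + 4 / 3)" by simp
  thus ?thesis using Sb_pos[of "exp u" 0] Sb_pos[of "exp s" 0] a(4) es by (simp add: exp_add mult_ac)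
qed

lemma claimB:
  assumes a: "t0 < exp s" "ereal (exp s) < conv_radius b"
  shows "ereal (exp (s + h s)) < conv_radius b"
proof (cases "conv_radius b")
  case PInf thus ?thesis by simp
next
  case (real R)
  show ?thesis
  proof (rule ccontr)
    assume "\<not> ereal (exp (s + h s)) < conv_radius b"
    hence R: "R \<le> exp (s + h s)" using real by auto
    have F: "upto (conv_radius b) \<noteq> bot" using upto_nontrivial radius by auto
    have e1: "eventually (\<lambda>t. exp (4 / 3) * S b 0 (exp s) < S b 0 t) (upto (conv_radius b))"
      using ginf filterlim_at_top_dense by blast
    have e2: "eventually (\<lambda>t. exp s < t) (upto (conv_radius b))"
      by (rule ev_upto_gt) (use radius a in auto)
    have e3: "eventually (\<lambda>t. 0 < t \<and> ereal t < conv_radius b) (upto (conv_radius b))"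
      by (rule ev_upto_dom) (use radius in auto)
    obtain t where t: "exp (4 / 3) * S b 0 (exp s) < S b 0 t" "exp s < t" "0 < t" "ereal t < conv_radius b"
      using eventually_happens'[OF F eventually_conj[OF e1 eventually_conj[OF e2 e3]]] by auto
    have u1: "s \<le> ln t" using t(2,3) by (metis exp_le_cancel_iff exp_ln less_imp_le)
    have "t < R" using t(4) real by auto
    hence "ln t \<le> s + h s" using R t(3) by (metis exp_le_cancel_iff exp_ln less_imp_le order_less_le_trans)
    hence "S b 0 (exp (ln t)) \<le> exp (4 / 3) * S b 0 (exp s)"
      by (intro claimG) (use a u1 t in auto)
    thus False using t by simp
  qed
qed (use radius in auto)

lemma claimC:
  assumes t: "t0 < t" "ereal t < conv_radius b"
  shows "S b k t \<le> fact k * exp (4 / 3) * kmean b t ^ k * S b 0 t"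
proof -
  have tp: "0 < t" using t t0 by auto
  define s where "s = ln t"
  have ts: "t = exp s" using tp by (simp add: s_def)
  define \<delta> where "\<delta> = h s"
  define M where "M = kmean b t"
  have Mp: "0 < M" using m_pos[OF tp t(2)] by (simp add: M_def)
  have di: "\<delta> = inverse M" by (simp add: \<delta>_def h_def M_def s_def tp)
  have Md: "M * \<delta> = 1" using Mp di by simp
  have dp: "0 < \<delta>" using Mp di by simp
  define x' where "x' = exp (s + \<delta>)"
  have crx: "ereal x' < conv_radius b" unfolding x'_def \<delta>_def using claimB t ts by auto
  have x'p: "0 < x'" by (simp add: x'_def)
  have "S b k t \<le> (\<Sum>n. fact k * M ^ k * (b n * real n ^ 0 * x' ^ n))"
    unfolding S_def
  proof (rule suminf_le)
    show "summable (\<lambda>n. b n * real n ^ k * t ^ n)" using S_summable[of t b k] t tp by auto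
    show "summable (\<lambda>n. fact k * M ^ k * (b n * real n ^ 0 * x' ^ n))"
      using S_summable[of x' b 0] crx x'p by (intro summable_mult) auto
    fix n
    have xn: "x' ^ n = t ^ n * exp (real n * \<delta>)"
      by (simp add: x'_def ts exp_add power_mult_distrib exp_of_nat_mult[symmetric] mult_ac)
    have "M ^ k * (real n * \<delta>) ^ k = (real n * (M * \<delta>)) ^ k" by (simp add: power_mult_distrib[symmetric] mult_ac)
    hence "real n ^ k = M ^ k * (real n * \<delta>) ^ k" using Md by simp
    also have "(real n * \<delta>) ^ k \<le> fact k * exp (real n * \<delta>)"
      using exp_ge_pow_fact[of "real n * \<delta>" k] dp by (simp add: field_simps)
    finally have nk: "real n ^ k \<le> M ^ k * (fact k * exp (real n * \<delta>))"
      using Mp by (simp add: mult_left_mono)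
    have "b n * real n ^ k * t ^ n \<le> b n * (M ^ k * (fact k * exp (real n * \<delta>))) * t ^ n"
      using nk nonneg tp by (intro mult_right_mono mult_left_mono) auto
    also have "\<dots> = fact k * M ^ k * (b n * real n ^ 0 * x' ^ n)" by (simp add: xn mult_ac)
    finally show "b n * real n ^ k * t ^ n \<le> fact k * M ^ k * (b n * real n ^ 0 * x' ^ n)" .
  qed
  also have "\<dots> = fact k * M ^ k * S b 0 x'"
    unfolding S_def by (rule suminf_mult[OF S_summable]) (use crx x'p in auto)
  also have "S b 0 x' \<le> exp (4 / 3) * S b 0 t"
    unfolding x'_def ts by (rule claimG) (use t ts crx x'_def \<delta>_def dp in auto)
  hence "fact k * M ^ k * S b 0 x' \<le> fact k * M ^ k * (exp (4 / 3) * S b 0 t)"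
    using Mp by (intro mult_left_mono) auto
  finally show ?thesis by (simp add: M_def mult_ac)
qed

lemma lambda_bound:
  assumes t: "t0 < t" "ereal t < conv_radius b" and k: "2 \<le> k"
  shows "S b k t / sqrt (S b 2 t) ^ k \<le> fact k * exp (4 / 3) / sqrt (S b 0 t) ^ (k - 2)"
proof -
  have tp: "0 < t" using t t0 by auto
  define M where "M = kmean b t"
  have Mp: "0 < M" using m_pos[OF tp t(2)] by (simp add: M_def)
  have p0: "0 < S b 0 t" using Sb_pos[OF tp t(2)] .
  have p2: "0 < S b 2 t" using Sb_pos[OF tp t(2)] .
  have M_eq: "M = S b 1 t / S b 0 t" using kmean_eq[OF tp t(2)] by (simp add: M_def)
  have "M ^ 2 * S b 0 t \<le> S b 2 t"
    using CS[OF tp t(2)] p0 by (simp add: M_eq power2_eq_square field_simps)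
  hence "sqrt (M ^ 2 * S b 0 t) \<le> sqrt (S b 2 t)" by simp
  hence sq: "M * sqrt (S b 0 t) \<le> sqrt (S b 2 t)" using Mp by (simp add: real_sqrt_mult)
  have sq0: "0 < sqrt (S b 0 t)" using p0 by simp
  have "(M * sqrt (S b 0 t)) ^ k \<le> sqrt (S b 2 t) ^ k"
    using sq Mp sq0 by (intro power_mono) auto
  have "S b k t / sqrt (S b 2 t) ^ k \<le> S b k t / (M * sqrt (S b 0 t)) ^ k"
    using \<open>(M * sqrt (S b 0 t)) ^ k \<le> sqrt (S b 2 t) ^ k\<close> Mp sq0 S_nonneg[OF nonneg, of t k] tp t(2) p2
    by (intro divide_left_mono) (auto intro!: mult_pos_pos zero_less_power)
  also have "\<dots> \<le> (fact k * exp (4 / 3) * M ^ k * S b 0 t) / (M * sqrt (S b 0 t)) ^ k"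
    using claimC[OF t, of k] Mp sq0 by (intro divide_right_mono) (auto simp: M_def)
  also have "\<dots> = fact k * exp (4 / 3) * (S b 0 t / sqrt (S b 0 t) ^ k)"
    using Mp sq0 by (simp add: power_mult_distrib field_simps)
  also have "S b 0 t / sqrt (S b 0 t) ^ k = 1 / sqrt (S b 0 t) ^ (k - 2)"
  proof -
    have "sqrt (S b 0 t) ^ k = sqrt (S b 0 t) ^ 2 * sqrt (S b 0 t) ^ (k - 2)"
      using k by (metis le_add_diff_inverse power_add)
    thus ?thesis using p0 sq0 by simp
  qed
  finally show ?thesis by simp
qed

end



lemma lambda_lim:
  fixes b :: "nat \<Rightarrow> real"
  assumes nonneg: "\<forall>n. b n \<ge> 0" and nc: "b n0 > 0" "n0 > 0" and radius: "conv_radius b > 0"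
    and clan: "is_clan b" and g_infty: "filterlim (ps b) at_top (upto (conv_radius b))"
    and k: "3 \<le> k"
  shows "((\<lambda>t. S b k t / sqrt (S b 2 t) ^ k) \<longlongrightarrow> 0) (upto (conv_radius b))"
proof -
  interpret kh b n0 using nonneg nc radius by unfold_locales auto
  define F where "F = upto (conv_radius b)"
  have ginfF: "filterlim (S b 0) at_top F" using g_infty by (simp add: ps_eq_S F_def)
  have "eventually (\<lambda>t. dist (ksd b t / kmean b t) 0 < 1/2) F"
    using clan unfolding is_clan_def F_def by (rule tendstoD) simp
  moreover have "eventually (\<lambda>t. 0 < t \<and> ereal t < conv_radius b) F"
    unfolding F_def by (rule ev_upto_dom[OF radius])
  ultimately have "eventually (\<lambda>t. \<bar>kvar b t\<bar> \<le> kmean b t ^ 2 / 4) F"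
  proof eventually_elim
    case (elim t)
    have mp: "0 < kmean b t" using m_pos elim by auto
    have "\<bar>ksd b t\<bar> < kmean b t / 2" using elim(1) mp by (simp add: abs_divide field_simps)
    hence "\<bar>ksd b t\<bar> ^ 2 \<le> (kmean b t / 2) ^ 2" by (intro power_mono) auto
    moreover have "\<bar>ksd b t\<bar> ^ 2 = \<bar>kvar b t\<bar>" by (simp add: ksd_def sqrt_sq_abs)
    ultimately show ?case by (simp add: power_divide)
  qed
  then obtain t0 where t0: "0 < t0" "ereal t0 < conv_radius b"
    "\<forall>t. t0 < t \<and> ereal t < conv_radius b \<longrightarrow> \<bar>kvar b t\<bar> \<le> kmean b t ^ 2 / 4"
    unfolding F_def ev_upto_iff[OF radius] by auto
  interpret kh_clan b n0 t0
    by unfold_locales (use t0 ginfF F_def in auto)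
  define C where "C = fact k * exp (4 / 3 :: real)"
  have upper: "((\<lambda>t. C / sqrt (S b 0 t) ^ (k - 2)) \<longlongrightarrow> 0) F"
  proof (rule tendsto_divide_0[OF tendsto_const])
    have "filterlim (\<lambda>t. sqrt (S b 0 t)) at_top F"
      by (rule filterlim_compose[OF sqrt_at_top ginfF])
    hence "filterlim (\<lambda>t. sqrt (S b 0 t) ^ (k - 2)) at_top F"
      by (rule filterlim_pow_at_top[rotated]) (use k in auto)
    thus "filterlim (\<lambda>t. sqrt (S b 0 t) ^ (k - 2)) at_infinity F"
      by (rule filterlim_at_top_imp_at_infinity)
  qed
  have ev: "eventually (\<lambda>t. t0 < t \<and> ereal t < conv_radius b) F"
    unfolding F_def ev_upto_iff[OF radius] using t0 by auto
  show ?thesis unfolding F_def[symmetric]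
  proof (rule tendsto_sandwich[OF _ _ tendsto_const upper])
    show "eventually (\<lambda>t. 0 \<le> S b k t / sqrt (S b 2 t) ^ k) F"
      using ev by eventually_elim (use S_nonneg[OF nonneg] t0 in \<open>auto intro!: divide_nonneg_nonneg\<close>)
    show "eventually (\<lambda>t. S b k t / sqrt (S b 2 t) ^ k \<le> C / sqrt (S b 0 t) ^ (k - 2)) F"
      using ev by eventually_elim (use lambda_bound k in \<open>auto simp: C_def\<close>)
  qed
qed

lemma gm_aux: fixes A B F c d :: real assumes "A \<noteq> 0" "B \<noteq> 0" "c \<noteq> 0"
  shows "d * (F/(A*B)) = ((2*c)*d*F)/(2*A*(c*B))"
  using assms by (simp add: field_simps)

fun gm :: "nat \<Rightarrow> real" where
  "gm 0 = 1" | "gm (Suc 0) = 0" | "gm (Suc (Suc j)) = real (Suc j) * gm j"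

lemma gm_closed: "gm (2 * k) = fact (2 * k) / (2 ^ k * fact k) \<and> gm (2 * k + 1) = 0"
proof (induction k)
  case 0 then show ?case by simp
next
  case (Suc k)
  have e: "2 * Suc k = Suc (Suc (2 * k))" by simp
  have o: "2 * Suc k + 1 = Suc (Suc (2 * k + 1))" by simp
  have f1: "fact (2 * Suc k) = real (Suc (Suc (2 * k))) * real (Suc (2 * k)) * (fact (2 * k) :: real)"
    by (simp only: e fact_Suc of_nat_mult mult.assoc)
  have f2: "fact (Suc k) = real (Suc k) * (fact k :: real)" by (simp only: fact_Suc)
  have pos: "(2::real) ^ k * fact k > 0" by simp
  have "gm (2 * Suc k) = real (Suc (2 * k)) * (fact (2 * k) / (2 ^ k * fact k))"
    using Suc by (simp only: e gm.simps)
  also have "\<dots> = fact (2 * Suc k) / (2 ^ Suc k * fact (Suc k))"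
  proof -
    have "real (Suc (Suc (2 * k))) = 2 * real (Suc k)" by simp
    thus ?thesis unfolding f1 f2 power_Suc
      by (simp only:) (rule gm_aux, auto)
  qed
  finally show ?case using Suc by (simp only: o gm.simps) simp
qed

lemma gm_normal: "(LINT x|std_normal_distribution. x ^ m) = gm m"
proof (cases "even m")
  case True
  then obtain k where "m = 2 * k" by auto
  thus ?thesis using std_normal_distribution_even_moments(1)[of k] gm_closed[of k] by simp
next
  case False
  then obtain k where "m = 2 * k + 1" using oddE by blast
  thus ?thesis using integral_std_normal_distribution_moment_odd[of m] gm_closed[of k] False by simp
qed

lemma moments_lim:
  fixes b :: "nat \<Rightarrow> real"
  assumes nonneg: "\<forall>n. b n \<ge> 0" and nc: "b n0 > 0" "n0 > 0" and radius: "conv_radius b > 0"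
    and clan: "is_clan b" and g_infty: "filterlim (ps b) at_top (upto (conv_radius b))"
  shows "((\<lambda>t. nu b t j) \<longlongrightarrow> gm j) (upto (conv_radius b))"
proof (induction j rule: less_induct)
  case (less j)
  define F where "F = upto (conv_radius b)"
  have dom: "eventually (\<lambda>t. 0 < t \<and> ereal t < conv_radius b) F"
    unfolding F_def by (rule ev_upto_dom[OF radius])
  define L where "L = (\<lambda>i t. S b (Suc i) t / sqrt (S b 2 t) ^ Suc i)"
  have L1: "((\<lambda>t. L 1 t) \<longlongrightarrow> 1) F"
  proof (rule tendsto_eventually)
    show "eventually (\<lambda>t. L 1 t = 1) F"
      using dom
    proof eventually_elim
      case (elim t)
      have "0 < S b 2 t" using S_pos[OF nonneg _ _ nc(1)] nc(2) elim by auto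
      thus ?case by (simp add: L_def numeral_2_eq_2)
    qed
  qed
  have L2: "((\<lambda>t. L i t) \<longlongrightarrow> 0) F" if "2 \<le> i" for i
    unfolding L_def F_def by (rule lambda_lim[OF nonneg nc radius clan g_infty]) (use that in auto)
  show ?case
  proof (cases j)
    case 0
    show ?thesis unfolding 0
      by (rule tendsto_eventually) (use dom nu_0[OF nonneg] in \<open>auto simp: F_def elim: eventually_mono\<close>)
  next
    case (Suc p)
    have ev: "eventually (\<lambda>t. nu b t (Suc p) = (\<Sum>i\<in>{1..p}. real (p choose i) * L i t * nu b t (p - i))) F"
      using dom by eventually_elim (use nu_rec[OF nonneg nc] in \<open>auto simp: L_def\<close>)
    have lim: "((\<lambda>t. \<Sum>i\<in>{1..p}. real (p choose i) * L i t * nu b t (p - i)) \<longlongrightarrow>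
        (\<Sum>i\<in>{1..p}. real (p choose i) * (if i = 1 then 1 else 0) * gm (p - i))) F"
    proof (intro tendsto_sum tendsto_mult tendsto_const)
      fix i assume i: "i \<in> {1..p}"
      show "((\<lambda>t. L i t) \<longlongrightarrow> (if i = 1 then 1 else 0)) F"
        using L1 L2[of i] i by auto
      show "((\<lambda>t. nu b t (p - i)) \<longlongrightarrow> gm (p - i)) F"
        using less[of "p - i"] i Suc by (auto simp: F_def)
    qed
    have "(\<Sum>i\<in>{1..p}. real (p choose i) * (if i = 1 then 1 else 0) * gm (p - i)) = gm (Suc p)"
    proof (cases p)
      case 0 thus ?thesis by simp
    next
      case (Suc q)
      have "(\<Sum>i\<in>{1..p}. real (p choose i) * (if i = 1 then 1 else 0) * gm (p - i)) =
            (\<Sum>i\<in>{1..p}. if i = 1 then real p * gm q else 0)"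
        by (intro sum.cong refl) (auto simp: Suc)
      also have "\<dots> = real p * gm q" using Suc by (simp add: sum.delta)
      finally show ?thesis using Suc by simp
    qed
    with lim have "((\<lambda>t. \<Sum>i\<in>{1..p}. real (p choose i) * L i t * nu b t (p - i)) \<longlongrightarrow> gm (Suc p)) F"
      by simp
    hence "((\<lambda>t. nu b t (Suc p)) \<longlongrightarrow> gm (Suc p)) F"
      by (rule tendsto_cong[THEN iffD1, rotated]) (use ev in \<open>auto elim: eventually_mono\<close>)
    thus ?thesis using Suc by (simp add: F_def)
  qed
qed



definition Dm :: "(nat \<Rightarrow> real) \<Rightarrow> nat measure" where
  "Dm p = density (count_space UNIV) (\<lambda>n. ennreal (p n))"

lemma Dm_prob:
  assumes "\<forall>n. p n \<ge> 0" "p sums 1"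
  shows "prob_space (Dm p)"
proof
  have "emeasure (Dm p) (space (Dm p)) = (\<integral>\<^sup>+ n. ennreal (p n) * indicator UNIV n \<partial>count_space UNIV)"
    unfolding Dm_def by (subst emeasure_density) auto
  also have "\<dots> = (\<Sum>n. ennreal (p n))" by (simp add: nn_integral_count_space_nat)
  also have "\<dots> = ennreal 1" using assms by (intro suminf_ennreal_eq) auto
  finally show "emeasure (Dm p) (space (Dm p)) = 1" by simp
qed

lemma Dm_integral:
  fixes f :: "nat \<Rightarrow> real"
  assumes "\<forall>n. p n \<ge> 0" "summable (\<lambda>n. \<bar>p n * f n\<bar>)"
  shows "integrable (Dm p) f" "integral\<^sup>L (Dm p) f = (\<Sum>n. p n * f n)"
proof -
  have i: "integrable (count_space UNIV) (\<lambda>n. p n *\<^sub>R f n)"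
    using assms(2) by (simp add: integrable_count_space_nat_iff)
  show "integrable (Dm p) f" unfolding Dm_def
    by (subst integrable_density) (use i assms(1) in auto)
  have "integral\<^sup>L (Dm p) f = integral\<^sup>L (count_space UNIV) (\<lambda>n. p n *\<^sub>R f n)"
    unfolding Dm_def by (subst integral_density) (use assms(1) in auto)
  also have "\<dots> = (\<Sum>n. p n * f n)" using integral_count_space_nat[OF i] by simp
  finally show "integral\<^sup>L (Dm p) f = (\<Sum>n. p n * f n)" .
qed

definition Km :: "(nat \<Rightarrow> real) \<Rightarrow> real \<Rightarrow> real measure" where
  "Km a t = distr (Dm (kprob a t)) borel (\<lambda>n. (real n - kmean a t) / ksd a t)"

lemma Km_facts:
  fixes b :: "nat \<Rightarrow> real"
  defines "a \<equiv> exp_coeffs b"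
  assumes nonneg: "\<forall>n. b n \<ge> 0" and t: "0 < t" "ereal t < conv_radius b"
  shows "real_distribution (Km a t)"
    and "\<And>k. integrable (Km a t) (\<lambda>x. x ^ k)"
    and "\<And>k. integral\<^sup>L (Km a t) (\<lambda>x. x ^ k) = nu b t k"
    and "\<And>k. even k \<Longrightarrow> integral\<^sup>L (Km a t) (\<lambda>x. \<bar>x\<bar> ^ k) = nu b t k"
    and "\<And>x. cdf (Km a t) x = knorm_cdf a t x"
proof -
  define p where "p = kprob a t"
  define w where "w = (\<lambda>n. (real n - kmean a t) / ksd a t)"
  have cr: "ereal \<bar>t\<bar> < conv_radius a" using t conv_radius_exp_coeffs[OF nonneg] by (auto simp: a_def)
  have P: "0 < ps a t" using S_a0_pos[OF nonneg t] by (simp add: a_def ps_eq_S)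
  have pn: "\<forall>n. p n \<ge> 0" using exp_coeffs_nonneg[OF nonneg] P t by (auto simp: p_def kprob_def a_def)
  have ps1: "p sums 1"
  proof -
    have "(\<lambda>n. a n * real n ^ 0 * t ^ n / ps a t) sums (S a 0 t / ps a t)"
      by (intro sums_divide S_sums cr)
    moreover have "kprob a t = (\<lambda>n. a n * t ^ n / S a 0 t)" by (auto simp: fun_eq_iff kprob_def ps_eq_S)
    ultimately show ?thesis using P by (simp add: p_def ps_eq_S)
  qed
  interpret D: prob_space "Dm p" by (rule Dm_prob[OF pn ps1])
  have Km: "Km a t = distr (Dm p) borel w" by (simp add: Km_def p_def w_def)
  have wm: "w \<in> measurable (Dm p) borel" by (simp add: Dm_def)
  show rd: "real_distribution (Km a t)" unfolding Km by (rule D.real_distribution_distr[OF wm])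
  have sm: "summable (\<lambda>n. \<bar>p n * w n ^ k\<bar>)" for k
  proof -
    have "summable (\<lambda>n. \<bar>a n * (real n - kmean a t) ^ k * t ^ n\<bar> / (ps a t * \<bar>ksd a t\<bar> ^ k))"
      by (intro summable_divide T_abs_summable cr)
    moreover have "\<bar>p n * w n ^ k\<bar> = \<bar>a n * (real n - kmean a t) ^ k * t ^ n\<bar> / (ps a t * \<bar>ksd a t\<bar> ^ k)" for n
      using P by (simp add: p_def w_def kprob_def abs_mult abs_divide power_abs power_divide)
    ultimately show ?thesis by simp
  qed
  show "integrable (Km a t) (\<lambda>x. x ^ k)" for k
    unfolding Km by (subst integrable_distr_eq[OF wm]) (use Dm_integral(1)[OF pn sm] in auto)
  have ex: "integral\<^sup>L (Km a t) (\<lambda>x. x ^ k) = (\<Sum>n. p n * w n ^ k)" for k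
  proof -
    have "integral\<^sup>L (distr (Dm p) borel w) (\<lambda>x. x ^ k) = integral\<^sup>L (Dm p) (\<lambda>n. w n ^ k)"
      by (rule integral_distr[OF wm]) simp
    thus ?thesis unfolding Km using Dm_integral(2)[OF pn sm] by simp
  qed
  show "integral\<^sup>L (Km a t) (\<lambda>x. x ^ k) = nu b t k" for k
    using ex[of k] knorm_moment_nu[OF nonneg t, of k]
    by (simp add: knorm_moment_def p_def w_def a_def)
  show "even k \<Longrightarrow> integral\<^sup>L (Km a t) (\<lambda>x. \<bar>x\<bar> ^ k) = nu b t k" for k
    using ex[of k] knorm_moment_nu[OF nonneg t, of k]
    by (simp add: knorm_moment_def p_def w_def a_def power_even_abs)
  show "cdf (Km a t) x = knorm_cdf a t x" for x
  proof -
    interpret K: real_distribution "Km a t" by (rule rd)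
    have smi: "summable (\<lambda>n. \<bar>p n * indicator {..x} (w n)\<bar>)"
    proof (rule summable_comparison_test'[OF sums_summable[OF ps1]])
      show "norm \<bar>p n * indicator {..x} (w n)\<bar> \<le> p n" for n using pn by (auto simp: indicator_def)
    qed
    have "cdf (Km a t) x = integral\<^sup>L (Km a t) (indicator {..x} :: real \<Rightarrow> real)"
      by (simp add: cdf_def)
    also have "\<dots> = (\<Sum>n. p n * indicator {..x} (w n))"
    proof -
      have "integral\<^sup>L (distr (Dm p) borel w) (indicator {..x} :: real \<Rightarrow> real) = integral\<^sup>L (Dm p) (\<lambda>n. indicator {..x} (w n) :: real)"
        by (rule integral_distr[OF wm]) simp
      thus ?thesis unfolding Km using Dm_integral(2)[OF pn smi] by simp
    qed
    also have "\<dots> = knorm_cdf a t x"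
      unfolding knorm_cdf_def by (intro suminf_cong) (auto simp: p_def w_def indicator_def)
    finally show ?thesis .
  qed
qed



lemma exp_coeffs_ge:
  assumes nonneg: "\<forall>n. b n \<ge> 0" and n: "n \<ge> 1"
  shows "exp (b 0) * b n \<le> exp_coeffs b n"
proof -
  have "real n * (b n * exp_coeffs b 0) \<le> (\<Sum>k\<le>n. real k * b k * exp_coeffs b (n - k))"
    using member_le_sum[of n "{..n}" "\<lambda>k. real k * b k * exp_coeffs b (n - k)"]
      exp_coeffs_nonneg[OF nonneg] nonneg by (auto simp: mult_ac)
  hence "real n * (b n * exp_coeffs b 0) \<le> real n * exp_coeffs b n" by (simp add: exp_coeffs_rec)
  thus ?thesis using n by (simp add: exp_coeffs_0 mult_ac)
qed

lemma conv_radius_exp_coeffs_eq: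
  assumes nonneg: "\<forall>n. b n \<ge> 0"
  shows "conv_radius (exp_coeffs b) = conv_radius b"
proof (rule antisym[OF _ conv_radius_exp_coeffs[OF nonneg]])
  show "conv_radius (exp_coeffs b) \<le> conv_radius b"
  proof (rule conv_radius_geI_ex')
    fix r :: real assume r: "0 < r" "ereal r < conv_radius (exp_coeffs b)"
    have "summable (\<lambda>n. exp (- b 0) * (exp_coeffs b n * r ^ n))"
      by (intro summable_mult summable_in_conv_radius) (use r in auto)
    hence "summable (\<lambda>n. b n * r ^ n)"
    proof (rule summable_comparison_test'[where N=1])
      fix n :: nat assume "n \<ge> 1"
      hence "exp (b 0) * b n \<le> exp_coeffs b n" by (rule exp_coeffs_ge[OF nonneg])
      hence "b n \<le> exp (- b 0) * exp_coeffs b n" by (simp add: exp_minus field_simps)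
      hence "b n * r ^ n \<le> exp (- b 0) * exp_coeffs b n * r ^ n" using r by (intro mult_right_mono) auto
      thus "norm (b n * r ^ n) \<le> exp (- b 0) * (exp_coeffs b n * r ^ n)" using nonneg r by (simp add: mult_ac)
    qed
    thus "summable (\<lambda>n. b n * of_real r ^ n)" by simp
  qed
qed

lemma seq_to_upto:
  fixes f :: "real \<Rightarrow> real"
  assumes r: "r > 0" and seq: "\<And>X. filterlim X (upto r) sequentially \<Longrightarrow> (\<lambda>n. f (X n)) \<longlonglongrightarrow> L"
  shows "(f \<longlongrightarrow> L) (upto r)"
proof (cases r)
  case PInf
  show ?thesis unfolding upto_def PInf
    by (simp, rule tendsto_at_topI_sequentially) (use seq in \<open>auto simp: upto_def PInf\<close>)
next
  case (real R)
  have R: "0 < R" using r real by auto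
  have "(f \<longlongrightarrow> L) (at_left R)"
  proof (rule tendsto_at_left_sequentially[OF R])
    fix S :: "nat \<Rightarrow> real" assume S: "\<And>n. S n < R" "\<And>n. 0 < S n" "incseq S" "S \<longlonglongrightarrow> R"
    have "filterlim S (at_left R) sequentially"
      by (rule tendsto_imp_filterlim_at_left[OF S(4)]) (use S(1) in auto)
    thus "(\<lambda>n. f (S n)) \<longlonglongrightarrow> L" using seq by (auto simp: upto_def real)
  qed
  thus ?thesis by (simp add: upto_def real)
qed (use r in auto)

lemma pow_fact_lim: "(\<lambda>n. (y::real) ^ n / fact n) \<longlonglongrightarrow> 0"
proof -
  have "(\<lambda>n. inverse (fact n) * y ^ n) \<longlonglongrightarrow> 0" by (rule summable_LIMSEQ_zero[OF summable_exp])
  thus ?thesis by (simp add: divide_inverse mult.commute)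
qed

lemma cq_lim:
  fixes \<theta> :: real
  shows "(\<lambda>q. \<bar>\<theta>\<bar> ^ (2 * q) / fact (2 * q) * (gm (2 * q) + 1)) \<longlonglongrightarrow> 0"
proof -
  have e: "\<bar>\<theta>\<bar> ^ (2 * q) / fact (2 * q) * (gm (2 * q) + 1) = (\<theta>^2 / 2) ^ q / fact q + \<bar>\<theta>\<bar> ^ (2 * q) / fact (2 * q)" for q
  proof -
    have "\<bar>\<theta>\<bar> ^ (2 * q) / fact (2 * q) * gm (2 * q) = \<bar>\<theta>\<bar> ^ (2 * q) / (2 ^ q * fact q)"
      using gm_closed[of q] by simp
    also have "\<dots> = (\<theta>^2 / 2) ^ q / fact q"
      by (simp add: power_mult power_divide power2_abs)
    finally show ?thesis by (simp add: distrib_left)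
  qed
  have l1: "(\<lambda>q. (\<theta>^2 / 2) ^ q / fact q) \<longlonglongrightarrow> 0" by (rule pow_fact_lim)
  have l2: "(\<lambda>q. \<bar>\<theta>\<bar> ^ (2 * q) / fact (2 * q)) \<longlonglongrightarrow> 0"
    using filterlim_compose[OF pow_fact_lim[of "\<bar>\<theta>\<bar>"] mult_nat_left_at_top[of 2]] by simp
  show ?thesis unfolding e using tendsto_add[OF l1 l2] by simp
qed

locale thm_setup = kh +
  assumes clan: "is_clan b" and g_infty: "filterlim (ps b) at_top (upto (conv_radius b))"
begin

abbreviation "F \<equiv> upto (conv_radius b)"
abbreviation "a \<equiv> exp_coeffs b"

lemma dom: "eventually (\<lambda>t. 0 < t \<and> ereal t < conv_radius b) F"
  by (rule ev_upto_dom[OF radius])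

lemma nu_lim: "((\<lambda>t. nu b t j) \<longlongrightarrow> gm j) F"
  by (rule moments_lim[OF nonneg nc radius clan g_infty])

lemma char_lim: "((\<lambda>t. char (Km a t) \<theta>) \<longlongrightarrow> char std_normal_distribution \<theta>) F"
proof (rule tendstoI)
  fix \<epsilon> :: real assume \<epsilon>: "0 < \<epsilon>"
  have "eventually (\<lambda>q. \<bar>\<theta>\<bar> ^ (2 * q) / fact (2 * q) * (gm (2 * q) + 1) < \<epsilon> / 6) sequentially"
    using cq_lim[of \<theta>] \<epsilon> by (intro order_tendstoD) auto
  then obtain q where q: "\<bar>\<theta>\<bar> ^ (2 * q) / fact (2 * q) * (gm (2 * q) + 1) < \<epsilon> / 6"
    by (auto simp: eventually_sequentially)
  define K where "K = 2 * q"
  define c where "c = 2 * \<bar>\<theta>\<bar> ^ K / fact K"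
  have c0: "0 \<le> c" by (simp add: c_def)
  have cK: "c * (gm K + 1) < \<epsilon> / 3" using q by (simp add: c_def K_def field_simps)
  have gK: "0 \<le> gm K" using gm_closed[of q] by (simp add: K_def)
  define PN where "PN = (\<Sum>k\<le>K. ((\<i> * \<theta>) ^ k / fact k) * complex_of_real (gm k))"
  have N: "cmod (char std_normal_distribution \<theta> - PN) \<le> c * gm K"
  proof -
    interpret N: real_distribution std_normal_distribution by (rule real_dist_normal_dist)
    have "cmod (char std_normal_distribution \<theta> - (\<Sum>k\<le>K. ((\<i> * \<theta>) ^ k / fact k) * integral\<^sup>L std_normal_distribution (\<lambda>x. x ^ k)))
        \<le> (2 * \<bar>\<theta>\<bar> ^ K / fact K) * integral\<^sup>L std_normal_distribution (\<lambda>x. \<bar>x\<bar> ^ K)"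
      by (rule N.char_approx1) (rule integrable_std_normal_distribution_moment)
    moreover have "integral\<^sup>L std_normal_distribution (\<lambda>x. \<bar>x\<bar> ^ K) = gm K"
      using std_normal_distribution_even_moments_abs[of q] gm_closed[of q] by (simp add: K_def)
    ultimately show ?thesis by (simp add: PN_def gm_normal c_def)
  qed
  have ev1: "eventually (\<lambda>t. nu b t K < gm K + 1) F"
    using nu_lim[of K] by (intro order_tendstoD) auto
  have lP: "((\<lambda>t. \<Sum>k\<le>K. ((\<i> * \<theta>) ^ k / fact k) * complex_of_real (nu b t k)) \<longlongrightarrow> PN) F"
    unfolding PN_def by (intro tendsto_sum tendsto_mult tendsto_const tendsto_of_real nu_lim)
  have ev2: "eventually (\<lambda>t. dist (\<Sum>k\<le>K. ((\<i> * \<theta>) ^ k / fact k) * complex_of_real (nu b t k)) PN < \<epsilon> / 3) F"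
    using lP \<epsilon> by (intro tendstoD) auto
  show "eventually (\<lambda>t. dist (char (Km a t) \<theta>) (char std_normal_distribution \<theta>) < \<epsilon>) F"
    using dom ev1 ev2
  proof eventually_elim
    case (elim t)
    note KF = Km_facts[OF nonneg elim(1)[THEN conjunct1] elim(1)[THEN conjunct2]]
    interpret Kt: real_distribution "Km a t" by (rule KF(1))
    define Pt where "Pt = (\<Sum>k\<le>K. ((\<i> * \<theta>) ^ k / fact k) * complex_of_real (nu b t k))"
    have A: "cmod (char (Km a t) \<theta> - Pt) \<le> c * nu b t K"
    proof -
      have "cmod (char (Km a t) \<theta> - (\<Sum>k\<le>K. ((\<i> * \<theta>) ^ k / fact k) * integral\<^sup>L (Km a t) (\<lambda>x. x ^ k)))
          \<le> (2 * \<bar>\<theta>\<bar> ^ K / fact K) * integral\<^sup>L (Km a t) (\<lambda>x. \<bar>x\<bar> ^ K)"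
        by (rule Kt.char_approx1) (rule KF(2))
      thus ?thesis using KF(3) KF(4)[of K] by (simp add: Pt_def c_def K_def)
    qed
    have "dist (char (Km a t) \<theta>) (char std_normal_distribution \<theta>)
        \<le> cmod (char (Km a t) \<theta> - Pt) + cmod (Pt - PN) + cmod (PN - char std_normal_distribution \<theta>)"
    proof -
      have "cmod (char (Km a t) \<theta> - char std_normal_distribution \<theta>)
          \<le> cmod (char (Km a t) \<theta> - Pt) + (cmod (Pt - PN) + cmod (PN - char std_normal_distribution \<theta>))"
        by (rule norm_diff_triangle_le[OF order_refl norm_diff_triangle_le[OF order_refl order_refl]])
      thus ?thesis by (simp add: dist_norm add.assoc)
    qed
    also have "\<dots> \<le> c * (gm K + 1) + \<epsilon> / 3 + c * (gm K + 1)"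
    proof (intro add_mono)
      show "cmod (char (Km a t) \<theta> - Pt) \<le> c * (gm K + 1)"
        using A elim(2) c0 by (meson less_imp_le mult_left_mono order_trans)
      show "cmod (Pt - PN) \<le> \<epsilon> / 3" using elim(3) by (simp add: Pt_def dist_norm)
      have "cmod (PN - char std_normal_distribution \<theta>) \<le> c * gm K" using N by (simp add: norm_minus_commute)
      also have "\<dots> \<le> c * (gm K + 1)" using c0 by (simp add: mult_left_mono)
      finally show "cmod (PN - char std_normal_distribution \<theta>) \<le> c * (gm K + 1)" .
    qed
    also have "\<dots> < \<epsilon>" using cK by linarith
    finally show ?case .
  qed
qed

lemma normal_isCont_cdf: "isCont (cdf std_normal_distribution) x"
proof -
  interpret N: real_distribution std_normal_distribution by (rule real_dist_normal_dist)
  have "emeasure std_normal_distribution {x} = (\<integral>\<^sup>+ y. ennreal (std_normal_density y) * indicator {x} y \<partial>lborel)"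
    by (subst emeasure_density) auto
  also have "\<dots> = 0"
  proof -
    have "AE y in lborel. ennreal (std_normal_density y) * indicator {x} y = 0"
      using AE_lborel_singleton[of x] by eventually_elim (auto simp: indicator_def)
    hence "(\<integral>\<^sup>+ y. ennreal (std_normal_density y) * indicator {x} y \<partial>lborel) = (\<integral>\<^sup>+ y. 0 \<partial>(lborel :: real measure))"
      by (rule nn_integral_cong_AE)
    thus ?thesis by simp
  qed
  finally have "measure std_normal_distribution {x} = 0" by (simp add: measure_def)
  thus ?thesis by (simp add: N.isCont_cdf)
qed

lemma gaussian_a: "gaussian a"
  unfolding gaussian_def conv_radius_exp_coeffs_eq[OF nonneg]
proof
  fix x
  show "((\<lambda>t. knorm_cdf a t x) \<longlongrightarrow> std_normal_cdf x) F"
  proof (rule seq_to_upto[OF radius])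
    fix X assume X: "filterlim X F sequentially"
    define M where "M = (\<lambda>n. if 0 < X n \<and> ereal (X n) < conv_radius b then Km a (X n) else std_normal_distribution)"
    have evX: "eventually (\<lambda>n. 0 < X n \<and> ereal (X n) < conv_radius b) sequentially"
      using filterlim_iff[THEN iffD1, OF X, rule_format, OF dom] .
    have rdM: "real_distribution (M n)" for n
      using Km_facts(1)[OF nonneg] real_dist_normal_dist by (auto simp: M_def)
    have "weak_conv_m M std_normal_distribution"
    proof (rule levy_continuity[OF rdM real_dist_normal_dist])
      fix \<theta>
      have "(\<lambda>n. char (Km a (X n)) \<theta>) \<longlonglongrightarrow> char std_normal_distribution \<theta>"
        by (rule filterlim_compose[OF char_lim X])
      thus "(\<lambda>n. char (M n) \<theta>) \<longlonglongrightarrow> char std_normal_distribution \<theta>"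
        by (rule tendsto_cong[THEN iffD1, rotated]) (use evX in \<open>auto simp: M_def elim: eventually_mono\<close>)
    qed
    hence "(\<lambda>n. cdf (M n) x) \<longlonglongrightarrow> cdf std_normal_distribution x"
      using normal_isCont_cdf by (auto simp: weak_conv_m_def weak_conv_def)
    hence "(\<lambda>n. cdf (M n) x) \<longlonglongrightarrow> std_normal_cdf x" by (simp add: std_normal_cdf_def cdf_def)
    thus "(\<lambda>n. knorm_cdf a (X n) x) \<longlonglongrightarrow> std_normal_cdf x"
      by (rule tendsto_cong[THEN iffD1, rotated]) (use evX Km_facts(5)[OF nonneg] in \<open>auto simp: M_def elim!: eventually_mono\<close>)
  qed
qed

lemma moments_a: "m \<ge> 1 \<Longrightarrow> ((\<lambda>t. knorm_moment a t m) \<longlongrightarrow> (LINT x|std_normal_distribution. x ^ m)) F"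
  unfolding gm_normal
  by (rule tendsto_cong[THEN iffD1, rotated, OF nu_lim])
     (use dom knorm_moment_nu[OF nonneg] in \<open>auto elim!: eventually_mono\<close>)

end



lemma open_exp_lt: "open {s::real. ereal (exp s) < r}"
  by (rule open_Collect_less) (auto intro!: continuous_intros continuous_on_ereal)

lemma deriv_iter:
  assumes "ereal (exp s) < conv_radius b"
  shows "(deriv ^^ k) (\<lambda>s. ps b (exp s)) s = S b k (exp s)"
  using assms
proof (induction k arbitrary: s)
  case 0 then show ?case by (simp add: ps_eq_S)
next
  case (Suc k)
  have "deriv ((deriv ^^ k) (\<lambda>s. ps b (exp s))) s = S b (Suc k) (exp s)"
  proof (rule deriv_open_eq[OF open_exp_lt[of "conv_radius b"]])
    show "s \<in> {s. ereal (exp s) < conv_radius b}" using Suc.prems by simp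
    show "(deriv ^^ k) (\<lambda>s. ps b (exp s)) y = S b k (exp y)" if "y \<in> {s. ereal (exp s) < conv_radius b}" for y
      using Suc.IH that by simp
    show "((\<lambda>s. S b k (exp s)) has_real_derivative S b (Suc k) (exp s)) (at s)"
      by (rule S_deriv_exp[OF Suc.prems])
  qed
  thus ?case by simp
qed

lemma exp_filter:
  assumes "r > 0"
  shows "filterlim exp (upto r) (upto_ln r)"
proof (cases r)
  case PInf thus ?thesis by (simp add: upto_def upto_ln_def exp_at_top)
next
  case (real R)
  have R: "0 < R" using assms real by auto
  have "filterlim exp (at_left R) (at_left (ln R))"
  proof (rule tendsto_imp_filterlim_at_left)
    have "((\<lambda>x. exp x) \<longlongrightarrow> exp (ln R)) (at_left (ln R))"
      by (rule tendsto_exp[OF tendsto_ident_at])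
    thus "(exp \<longlongrightarrow> R) (at_left (ln R))" using R by simp
    show "eventually (\<lambda>x. exp x < R) (at_left (ln R))"
      unfolding eventually_at_left_field
    proof (rule exI[of _ "ln R - 1"], intro conjI allI impI)
      fix y assume "y < ln R"
      thus "exp y < R" using R by (metis exp_less_mono exp_ln)
    qed simp
  qed
  thus ?thesis by (simp add: upto_def upto_ln_def real)
qed (use assms in auto)

lemma powr_sqrt_pow: "0 < x \<Longrightarrow> x powr (real k / 2) = sqrt x ^ k"
proof -
  assume x: "0 < x"
  have "sqrt x ^ k = (x powr (1/2)) powr real k"
    using x by (simp add: powr_half_sqrt powr_realpow)
  also have "\<dots> = x powr (real k / 2)" by (simp add: powr_powr)
  finally show ?thesis by simp
qed

context thm_setup
begin

lemma part1:
  assumes k: "3 \<le> k"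
  shows "((\<lambda>s. (deriv ^^ k) (\<lambda>s. ps b (exp s)) s
                 / ((deriv ^^ 2) (\<lambda>s. ps b (exp s)) s) powr (real k / 2)) \<longlongrightarrow> 0) (upto_ln (conv_radius b))"
proof -
  have ef: "filterlim exp F (upto_ln (conv_radius b))" by (rule exp_filter[OF radius])
  have l: "((\<lambda>s. S b k (exp s) / sqrt (S b 2 (exp s)) ^ k) \<longlongrightarrow> 0) (upto_ln (conv_radius b))"
    using filterlim_compose[OF lambda_lim[OF nonneg nc radius clan g_infty k] ef] by simp
  have ev: "eventually (\<lambda>s. 0 < exp s \<and> ereal (exp s) < conv_radius b) (upto_ln (conv_radius b))"
    using filterlim_iff[THEN iffD1, OF ef, rule_format, OF dom] .
  show ?thesis
  proof (rule tendsto_cong[THEN iffD1, OF _ l])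
    show "eventually (\<lambda>s. S b k (exp s) / sqrt (S b 2 (exp s)) ^ k = (deriv ^^ k) (\<lambda>s. ps b (exp s)) s
                 / ((deriv ^^ 2) (\<lambda>s. ps b (exp s)) s) powr (real k / 2)) (upto_ln (conv_radius b))"
      using ev
    proof eventually_elim
      case (elim s)
      have p: "0 < S b 2 (exp s)" using Sb_pos elim by auto
      show ?case using elim p by (simp add: deriv_iter powr_sqrt_pow)
    qed
  qed
qed

end

theorem theorem4p13:
  fixes b :: "nat \<Rightarrow> real"
  assumes nonneg: "\<forall>n. b n \<ge> 0"
    and nonconst: "\<exists>n>0. b n \<noteq> 0"
    and radius: "conv_radius b > 0"
    and clan: "is_clan b"
    and g_infty: "filterlim (ps b) at_top (upto (conv_radius b))"
  shows "(\<forall>k::nat. k \<ge> 3 \<longrightarrow>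
           ((\<lambda>s. (deriv ^^ k) (\<lambda>s. ps b (exp s)) s
                 / ((deriv ^^ 2) (\<lambda>s. ps b (exp s)) s) powr (real k / 2))
             \<longlongrightarrow> 0) (upto_ln (conv_radius b)))
       \<and> (\<forall>m::nat. m \<ge> 1 \<longrightarrow>
           ((\<lambda>t. knorm_moment (exp_coeffs b) t m)
             \<longlongrightarrow> (LINT x|std_normal_distribution. x ^ m)) (upto (conv_radius b)))
       \<and> gaussian (exp_coeffs b)"
proof -
  obtain n0 where n0: "n0 > 0" "b n0 \<noteq> 0" using nonconst by auto
  have bn0: "b n0 > 0" using n0 nonneg by (metis less_eq_real_def)
  interpret thm_setup b n0
    by unfold_locales (use nonneg bn0 n0 radius clan g_infty in auto)
  show ?thesis using part1 moments_a gaussian_a by auto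
qed


end
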